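(* Let $\mathcal X=\mathbb R$, let $\mathbb E[X^2]<\infty$, let $\Delta(x,\hat x)=(x-\hat x)^2$, and let $$d(p_X,p_{\hat X})=W_2^2(p_X,p_{\hat X}):=\inf_{p_{X\hat X}\in\Pi(p_X,p_{\hat X})}\mathbb E[(X-\hat X)^2].$$ Then both of the following hold. - For every $D>0$ and $P>0$, $R(D,P)<\infty$. - For every $D>0$, $P>0$ and $\epsilon>0$ there is a kernel $p_{\tilde X|X}$ such that $\tilde X$ is discrete with finite support $\tilde{\mathcal X}\subseteq\mathbb R$ and all of the following hold: - $I(X;\tilde X)\le R(D,P)+\epsilon$; - $\mathbb E[(X-\tilde X)^2]\le D+\epsilon$; - $\mathbb E[\max_{\tilde x\in\tilde{\mathcal X}}(X-\tilde x)^2]<\infty$; - $W_2^2(p_X,p_{\tilde X})\le P+\epsilon$; - $W_2^2(p_X,\gamma)<\infty$ for every distribution $\gamma$ supported on $\tilde{\mathcal X}$.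
   Context: The rate-distortion-perception function is $$R(D,P):=\inf I(X;\hat X),$$ where the infimum is over kernels $p_{\hat X|X}$ from $\mathbb R$ to $\mathbb R$ with $\mathbb E[\Delta(X,\hat X)]\le D$ and $d(p_X,p_{\hat X})\le P$. $\Pi(\mu,\nu)$ is the set of couplings of $\mu$ and $\nu$. *)

theory Defs
  imports "HOL-Probability.Probability"
begin

text \<open>If P is not absolutely continuous w.r.t. Q, it is infinite. Otherwise, with f = dP/dQ,
  it is the Lebesgue integral of f ln f w.r.t. Q (the negative part of f ln f is bounded
  by 1/e, so the integral is well defined in (-inf, inf]).\<close>
definition KL_div :: "'a measure \<Rightarrow> 'a measure \<Rightarrow> ereal" where
  "KL_div P Q =
    (if sets P = sets Q \<and> absolutely_continuous Q P then
       (let f = (\<lambda>x. enn2real (RN_deriv Q P x)) in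
          enn2ereal (\<integral>\<^sup>+ x. ennreal (f x * ln (f x)) \<partial>Q)
        - enn2ereal (\<integral>\<^sup>+ x. ennreal (- (f x * ln (f x))) \<partial>Q))
     else \<infinity>)"

definition mutual_info_joint :: "(real \<times> real) measure \<Rightarrow> ereal" where
  "mutual_info_joint J = KL_div J (distr J borel fst \<Otimes>\<^sub>M distr J borel snd)"

definition kernels :: "(real \<Rightarrow> real measure) set" where
  "kernels = borel \<rightarrow>\<^sub>M prob_algebra borel"

definition joint :: "real measure \<Rightarrow> (real \<Rightarrow> real measure) \<Rightarrow> (real \<times> real) measure" where
  "joint \<mu> K = \<mu> \<bind> (\<lambda>x. distr (K x) (borel \<Otimes>\<^sub>M borel) (\<lambda>y. (x, y)))"

definition out_law :: "real measure \<Rightarrow> (real \<Rightarrow> real measure) \<Rightarrow> real measure" where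
  "out_law \<mu> K = distr (joint \<mu> K) borel snd"

definition MI :: "real measure \<Rightarrow> (real \<Rightarrow> real measure) \<Rightarrow> ereal" where
  "MI \<mu> K = mutual_info_joint (joint \<mu> K)"

definition distortion :: "real measure \<Rightarrow> (real \<Rightarrow> real measure) \<Rightarrow> ennreal" where
  "distortion \<mu> K = (\<integral>\<^sup>+ z. ennreal ((fst z - snd z)\<^sup>2) \<partial>(joint \<mu> K))"

definition couplings :: "real measure \<Rightarrow> real measure \<Rightarrow> (real \<times> real) measure set" where
  "couplings \<mu> \<nu> = {\<pi>. prob_space \<pi> \<and> sets \<pi> = sets (borel \<Otimes>\<^sub>M borel)
                        \<and> distr \<pi> borel fst = \<mu> \<and> distr \<pi> borel snd = \<nu>}"

definition W2sq :: "real measure \<Rightarrow> real measure \<Rightarrow> ennreal" where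
  "W2sq \<mu> \<nu> = (INF \<pi> \<in> couplings \<mu> \<nu>. \<integral>\<^sup>+ z. ennreal ((fst z - snd z)\<^sup>2) \<partial>\<pi>)"

definition RDP :: "real measure \<Rightarrow> real \<Rightarrow> real \<Rightarrow> ereal" where
  "RDP \<mu> D P = (INF K \<in> {K \<in> kernels. distortion \<mu> K \<le> ennreal D \<and> W2sq \<mu> (out_law \<mu> K) \<le> ennreal P}.
                  MI \<mu> K)"

end

theory Submission
  imports Defs
begin


definition psi :: "real \<Rightarrow> real" where "psi s = s * ln s - s + 1"

lemma psi_nonneg: assumes "s \<ge> 0" shows "psi s \<ge> 0"
proof (cases "s = 0")
  case True then show ?thesis by (simp add: psi_def)
next
  case False
  with assms have s: "s > 0" by auto
  have "ln (1/s) \<le> 1/s - 1" using s by (intro ln_le_minus_one) auto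
  then have "- ln s \<le> 1/s - 1" using s by (simp add: ln_div)
  then have "s * (- ln s) \<le> s * (1/s - 1)" using s by (intro mult_left_mono) auto
  moreover have "s * (1/s - 1) = 1 - s" using s by (simp add: field_simps)
  ultimately show ?thesis by (simp add: psi_def algebra_simps)
qed

lemma psi_tangent: assumes "s \<ge> 0" "c > 0" shows "psi c + ln c * (s - c) \<le> psi s"
proof (cases "s = 0")
  case True then show ?thesis using assms by (simp add: psi_def)
next
  case False
  with assms have s: "s > 0" by auto
  have "ln (c/s) \<le> c/s - 1" using s assms by (intro ln_le_minus_one) auto
  then have "ln c - ln s \<le> c/s - 1" using s assms by (simp add: ln_div)
  then have "s * (ln c - ln s) \<le> s * (c/s - 1)" using s by (intro mult_left_mono) auto
  moreover have "s * (c/s - 1) = c - s" using s by (simp add: field_simps)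
  ultimately show ?thesis by (simp add: psi_def algebra_simps)
qed

lemma xlnx_ge: fixes s :: real assumes "s \<ge> 0" shows "s * ln s \<ge> s - 1"
  using psi_nonneg[OF assms] by (simp add: psi_def)


lemma kernelsD: "K \<in> kernels \<Longrightarrow> K x \<in> space (prob_algebra borel)"
  unfolding kernels_def by (auto dest: measurable_space)

lemma kernel_sets: "K \<in> kernels \<Longrightarrow> sets (K x) = sets borel"
  using kernelsD[of K x] by (simp add: space_prob_algebra)

lemma kernel_space: "K \<in> kernels \<Longrightarrow> space (K x) = UNIV"
  using kernel_sets[of K x] sets_eq_imp_space_eq by fastforce

lemma kernel_prob: "K \<in> kernels \<Longrightarrow> prob_space (K x)"
  using kernelsD[of K x] by (simp add: space_prob_algebra)

lemma kernel_pair_meas: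
  assumes K: "K \<in> kernels"
  shows "(\<lambda>x. distr (K x) (borel \<Otimes>\<^sub>M borel) (Pair x)) \<in> (borel::real measure) \<rightarrow>\<^sub>M prob_algebra (borel \<Otimes>\<^sub>M (borel::real measure))"
proof (rule measurable_prob_algebraI)
  fix x :: real
  interpret prob_space "K x" using kernel_prob[OF K] .
  show "prob_space (distr (K x) (borel \<Otimes>\<^sub>M borel) (Pair x))"
    by (rule prob_space_distr) (simp add: measurable_cong_sets[OF kernel_sets[OF K] refl])
next
  have "case_prod Pair \<in> (borel::real measure) \<Otimes>\<^sub>M (borel::real measure) \<rightarrow>\<^sub>M borel \<Otimes>\<^sub>M borel"
    by simp
  moreover have "K \<in> borel \<rightarrow>\<^sub>M subprob_algebra borel"
    using K unfolding kernels_def by (rule measurable_prob_algebraD)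
  ultimately show "(\<lambda>x. distr (K x) (borel \<Otimes>\<^sub>M borel) (Pair x)) \<in> borel \<rightarrow>\<^sub>M subprob_algebra (borel \<Otimes>\<^sub>M borel)"
    by (rule measurable_distr2)
qed

locale law =
  fixes \<mu> :: "real measure"
  assumes prob: "prob_space \<mu>" and sets_mu: "sets \<mu> = sets borel"
begin

lemma mu_space: "\<mu> \<in> space (prob_algebra borel)"
  using prob sets_mu by (simp add: space_prob_algebra)

lemma space_mu: "space \<mu> = UNIV"
  using sets_eq_imp_space_eq[OF sets_mu] by simp

lemma meas_mu: "measurable \<mu> N = measurable borel N"
  by (rule measurable_cong_sets[OF sets_mu refl])

lemma joint_space: "K \<in> kernels \<Longrightarrow> joint \<mu> K \<in> space (prob_algebra (borel \<Otimes>\<^sub>M borel))"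
  unfolding joint_def space_prob_algebra
  using prob_space_bind'[OF mu_space kernel_pair_meas] sets_bind'[OF mu_space kernel_pair_meas] by auto

lemma joint_prob: "K \<in> kernels \<Longrightarrow> prob_space (joint \<mu> K)"
  using joint_space by (simp add: space_prob_algebra)

lemma joint_sets: "K \<in> kernels \<Longrightarrow> sets (joint \<mu> K) = sets (borel \<Otimes>\<^sub>M borel)"
  using joint_space by (simp add: space_prob_algebra)

lemma emeasure_joint:
  assumes K: "K \<in> kernels" and C: "C \<in> sets (borel \<Otimes>\<^sub>M borel)"
  shows "emeasure (joint \<mu> K) C = (\<integral>\<^sup>+x. emeasure (K x) (Pair x -` C) \<partial>\<mu>)"
  unfolding joint_def
  by (subst emeasure_bind_prob_algebra[OF mu_space kernel_pair_meas[OF K] C])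
     (auto intro!: nn_integral_cong simp: emeasure_distr kernel_space[OF K]
         measurable_cong_sets[OF kernel_sets[OF K] refl] C)

lemma nn_integral_joint:
  assumes K: "K \<in> kernels" and h: "h \<in> borel_measurable (borel \<Otimes>\<^sub>M borel)"
  shows "(\<integral>\<^sup>+z. h z \<partial>joint \<mu> K) = (\<integral>\<^sup>+x. \<integral>\<^sup>+y. h (x,y) \<partial>K x \<partial>\<mu>)"
proof -
  have N: "(\<lambda>x. distr (K x) (borel \<Otimes>\<^sub>M borel) (Pair x)) \<in> \<mu> \<rightarrow>\<^sub>M subprob_algebra (borel \<Otimes>\<^sub>M borel)"
    using measurable_prob_algebraD[OF kernel_pair_meas[OF K]] by (simp add: meas_mu)
  show ?thesis
    unfolding joint_def nn_integral_bind[OF h N]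
    by (auto intro!: nn_integral_cong simp: nn_integral_distr 
         measurable_cong_sets[OF kernel_sets[OF K] refl] h)
qed

end


lemma Times_eq_fst_vimage: "A \<times> UNIV = {x. fst x \<in> A}" by auto
lemma Times_eq_snd_vimage: "UNIV \<times> B = {x. snd x \<in> B}" by auto


definition kq :: "(real \<Rightarrow> real measure) \<Rightarrow> (real \<Rightarrow> real) \<Rightarrow> real \<Rightarrow> real measure" where
  "kq K g = (\<lambda>x. distr (K x) borel g)"

lemma kq_kernels: "K \<in> kernels \<Longrightarrow> g \<in> borel_measurable borel \<Longrightarrow> kq K g \<in> kernels"
  unfolding kq_def kernels_def
  by (rule measurable_compose[OF _ measurable_distr_prob_space]) auto

lemma emeasure_kq: "K \<in> kernels \<Longrightarrow> g \<in> borel_measurable borel \<Longrightarrow> B \<in> sets borel \<Longrightarrow>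
   emeasure (kq K g x) B = emeasure (K x) (g -` B)"
  unfolding kq_def by (subst emeasure_distr)
    (auto simp: measurable_cong_sets[OF kernel_sets refl] kernel_space)

lemma nn_integral_kq: "K \<in> kernels \<Longrightarrow> g \<in> borel_measurable borel \<Longrightarrow> h \<in> borel_measurable borel \<Longrightarrow>
   (\<integral>\<^sup>+y. h y \<partial>kq K g x) = (\<integral>\<^sup>+y. h (g y) \<partial>K x)"
  unfolding kq_def by (subst nn_integral_distr)
    (auto simp: measurable_cong_sets[OF kernel_sets refl] kernel_space)

context law begin

lemma distr_joint_fst: assumes K: "K \<in> kernels" shows "distr (joint \<mu> K) borel fst = \<mu>"
proof (rule measure_eqI)
  show "sets (distr (joint \<mu> K) borel fst) = sets \<mu>" by (simp add: sets_mu)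
next
  fix A assume A: "A \<in> sets (distr (joint \<mu> K) borel fst)"
  then have A': "A \<in> sets borel" by simp
  have "fst \<in> joint \<mu> K \<rightarrow>\<^sub>M borel" by (simp add: measurable_cong_sets[OF joint_sets[OF K] refl])
  then have "emeasure (distr (joint \<mu> K) borel fst) A = emeasure (joint \<mu> K) (A \<times> UNIV)"
    using A' by (subst emeasure_distr) (auto simp: sets_eq_imp_space_eq[OF joint_sets[OF K]] space_pair_measure vimage_def Times_eq_fst_vimage[symmetric])
  also have "\<dots> = (\<integral>\<^sup>+x. emeasure (K x) (Pair x -` (A \<times> UNIV)) \<partial>\<mu>)"
    using A' by (intro emeasure_joint K) auto
  also have "\<dots> = (\<integral>\<^sup>+x. indicator A x \<partial>\<mu>)"
    apply (intro nn_integral_cong)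
    using prob_space.emeasure_space_1[OF kernel_prob[OF K]] kernel_space[OF K]
    by (auto simp: indicator_def)
  also have "\<dots> = emeasure \<mu> A" using A' sets_mu by simp
  finally show "emeasure (distr (joint \<mu> K) borel fst) A = emeasure \<mu> A" .
qed

lemma out_law_space: "K \<in> kernels \<Longrightarrow> out_law \<mu> K \<in> space (prob_algebra borel)"
  unfolding out_law_def space_prob_algebra
  by (auto intro!: prob_space.prob_space_distr joint_prob simp: measurable_cong_sets[OF joint_sets refl])

lemma out_law_prob: "K \<in> kernels \<Longrightarrow> prob_space (out_law \<mu> K)"
  using out_law_space by (simp add: space_prob_algebra)

lemma out_law_sets[simp]: "sets (out_law \<mu> K) = sets borel"
  by (simp add: out_law_def)

lemma emeasure_out_law: assumes K: "K \<in> kernels" and B: "B \<in> sets borel"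
  shows "emeasure (out_law \<mu> K) B = (\<integral>\<^sup>+x. emeasure (K x) B \<partial>\<mu>)"
proof -
  have "snd \<in> joint \<mu> K \<rightarrow>\<^sub>M borel" by (simp add: measurable_cong_sets[OF joint_sets[OF K] refl])
  then have "emeasure (out_law \<mu> K) B = emeasure (joint \<mu> K) (UNIV \<times> B)"
    unfolding out_law_def
    using B by (subst emeasure_distr) (auto simp: sets_eq_imp_space_eq[OF joint_sets[OF K]] space_pair_measure vimage_def Times_eq_snd_vimage[symmetric])
  also have "\<dots> = (\<integral>\<^sup>+x. emeasure (K x) (Pair x -` (UNIV \<times> B)) \<partial>\<mu>)"
    using B by (intro emeasure_joint K) auto
  finally show ?thesis by simp
qed

lemma nn_integral_out_law: assumes K: "K \<in> kernels" and h: "h \<in> borel_measurable borel"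
  shows "(\<integral>\<^sup>+y. h y \<partial>out_law \<mu> K) = (\<integral>\<^sup>+z. h (snd z) \<partial>joint \<mu> K)"
  unfolding out_law_def
  using h by (subst nn_integral_distr) (auto simp: measurable_cong_sets[OF joint_sets[OF K] refl])

lemma out_law_kq: assumes K: "K \<in> kernels" and g: "g \<in> borel_measurable borel"
  shows "out_law \<mu> (kq K g) = distr (out_law \<mu> K) borel g"
proof (rule measure_eqI)
  fix B assume "B \<in> sets (out_law \<mu> (kq K g))"
  then have B: "B \<in> sets borel" by simp
  have gB: "g -` B \<in> sets borel" using g B by (auto simp: measurable_def)
  show "emeasure (out_law \<mu> (kq K g)) B = emeasure (distr (out_law \<mu> K) borel g) B"
    using B gB g
    by (simp add: emeasure_out_law[OF kq_kernels[OF K g] B] emeasure_kq[OF K g B]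
        emeasure_distr measurable_cong_sets[OF out_law_sets refl] emeasure_out_law[OF K]
        sets_eq_imp_space_eq[OF out_law_sets])
qed simp

lemma distortion_eq: assumes K: "K \<in> kernels"
  shows "distortion \<mu> K = (\<integral>\<^sup>+x. \<integral>\<^sup>+y. ennreal ((x - y)\<^sup>2) \<partial>K x \<partial>\<mu>)"
  unfolding distortion_def by (subst nn_integral_joint[OF K]) auto

lemma distortion_kq: assumes K: "K \<in> kernels" and g: "g \<in> borel_measurable borel"
  shows "distortion \<mu> (kq K g) = (\<integral>\<^sup>+z. ennreal ((fst z - g (snd z))\<^sup>2) \<partial>joint \<mu> K)"
  using g by (simp add: distortion_eq[OF kq_kernels[OF K g]] nn_integral_kq[OF K g] nn_integral_joint[OF K])

end


lemma psi_decomp: fixes s :: real assumes "s \<ge> 0"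
  shows "ennreal (psi s) + ennreal (- (s * ln s)) + ennreal s = ennreal (s * ln s) + 1"
proof (cases "s * ln s \<ge> 0")
  case True
  have "ennreal (psi s) + ennreal s = ennreal (psi s + s)"
    using psi_nonneg[OF assms] assms by (simp add: ennreal_plus)
  also have "psi s + s = s * ln s + 1" by (simp add: psi_def)
  finally show ?thesis using True by (simp add: ennreal_plus ennreal_neg)
next
  case False
  have "ennreal (psi s) + ennreal (- (s * ln s)) + ennreal s = ennreal (psi s + (- (s * ln s)) + s)"
    using psi_nonneg[OF assms] assms False by (simp only: ennreal_plus[symmetric] add_nonneg_nonneg)
  also have "psi s + (- (s * ln s)) + s = 1" by (simp add: psi_def)
  finally show ?thesis using False by (simp add: ennreal_neg)
qed

lemma KL_psi:
  assumes J: "prob_space J" and Q: "prob_space Q" and sets: "sets J = sets Q"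
    and ac: "absolutely_continuous Q J"
  shows "KL_div J Q = enn2ereal (\<integral>\<^sup>+x. ennreal (psi (enn2real (RN_deriv Q J x))) \<partial>Q)"
proof -
  interpret Q: prob_space Q by fact
  interpret J: prob_space J by fact
  define f where "f x = enn2real (RN_deriv Q J x)" for x
  have fm[measurable]: "f \<in> borel_measurable Q" unfolding f_def by measurable
  have fnn: "f x \<ge> 0" for x unfolding f_def by simp
  have fin: "AE x in Q. RN_deriv Q J x \<noteq> \<infinity>"
    by (rule Q.RN_deriv_finite) (auto simp: ac sets J.sigma_finite_measure_axioms)
  have "(\<integral>\<^sup>+x. ennreal (f x) \<partial>Q) = (\<integral>\<^sup>+x. RN_deriv Q J x * 1 \<partial>Q)"
    using fin by (intro nn_integral_cong_AE) (auto simp: f_def less_top)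
  also have "\<dots> = (\<integral>\<^sup>+x. 1 \<partial>J)"
    by (rule Q.RN_deriv_nn_integral[symmetric]) (auto simp: ac sets)
  also have "\<dots> = 1" by (simp add: J.emeasure_space_1)
  finally have int1: "(\<integral>\<^sup>+x. ennreal (f x) \<partial>Q) = 1" .
  define A where "A = (\<integral>\<^sup>+x. ennreal (psi (f x)) \<partial>Q)"
  define B where "B = (\<integral>\<^sup>+x. ennreal (- (f x * ln (f x))) \<partial>Q)"
  define C where "C = (\<integral>\<^sup>+x. ennreal (f x * ln (f x)) \<partial>Q)"
  have "A + B + 1 = (\<integral>\<^sup>+x. ennreal (psi (f x)) + ennreal (- (f x * ln (f x))) + ennreal (f x) \<partial>Q)"
    unfolding A_def B_def int1[symmetric] by (simp add: nn_integral_add psi_def)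
  also have "\<dots> = (\<integral>\<^sup>+x. ennreal (f x * ln (f x)) + 1 \<partial>Q)"
    using psi_decomp[OF fnn] by simp
  also have "\<dots> = C + 1" unfolding C_def by (simp add: nn_integral_add Q.emeasure_space_1)
  finally have "A + B + 1 = C + 1" .
  then have "1 + (A + B) = 1 + C" by (simp add: ac_simps)
  then have ABC: "A + B = C" by (simp add: ennreal_add_left_cancel)
  have "B \<le> (\<integral>\<^sup>+x. 1 \<partial>Q)" unfolding B_def
  proof (intro nn_integral_mono)
    fix x
    have "f x * ln (f x) \<ge> f x - 1" by (rule xlnx_ge[OF fnn])
    then have "- (f x * ln (f x)) \<le> 1" using fnn[of x] by linarith
    then show "ennreal (- (f x * ln (f x))) \<le> 1" by (simp add: ennreal_le_1)
  qed
  then have Bfin: "B \<noteq> \<infinity>" using Q.emeasure_space_1 by (auto simp: top_unique)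
  have "KL_div J Q = enn2ereal C - enn2ereal B"
    unfolding KL_div_def using sets ac by (simp add: Let_def C_def B_def f_def)
  also have "\<dots> = enn2ereal A + enn2ereal B - enn2ereal B"
    unfolding ABC[symmetric] by (simp add: plus_ennreal.rep_eq)
  also have "\<dots> = enn2ereal A"
    using Bfin by (cases "enn2ereal A"; cases "enn2ereal B") auto
  finally show ?thesis unfolding A_def f_def .
qed


lemma psi_meas[measurable]: "psi \<in> borel_measurable borel"
  unfolding psi_def by measurable

lemma nn_integral_fin_supp:
  fixes M :: "real measure"
  assumes S: "sets M = sets borel" and T: "finite T" and N: "emeasure M (UNIV - T) = 0"
  shows "(\<integral>\<^sup>+y. h y \<partial>M) = (\<Sum>t\<in>T. h t * emeasure M {t})"
proof -
  have sp: "space M = UNIV" using sets_eq_imp_space_eq[OF S] by simp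
  have TM: "T \<in> sets M" using T S by (simp add: finite_imp_closed)
  have "AE y in M. y \<in> T"
    using N TM by (intro AE_I[where N="UNIV - T"]) (auto simp: sp S)
  then have "(\<integral>\<^sup>+y. h y \<partial>M) = (\<integral>\<^sup>+y. (\<Sum>t\<in>T. h t * indicator {t} y) \<partial>M)"
    by (rule nn_integral_cong_AE[OF AE_mp]) (auto simp: indicator_def T)
  also have "\<dots> = (\<Sum>t\<in>T. (\<integral>\<^sup>+y. h t * indicator {t} y \<partial>M))"
    by (rule nn_integral_sum) (simp add: measurable_cong_sets[OF S refl])
  also have "\<dots> = (\<Sum>t\<in>T. h t * emeasure M {t})"
    by (intro sum.cong refl nn_integral_cmult_indicator) (simp add: S)
  finally show ?thesis .
qed

lemma kernel_measure_meas[measurable]: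
  assumes K: "K \<in> kernels" and B: "B \<in> sets borel"
  shows "(\<lambda>x. measure (K x) B) \<in> borel_measurable borel"
  using measurable_compose[OF K[unfolded kernels_def] measurable_measure_prob_algebra[OF B]] by (simp add: comp_def)

lemma kernel_emeasure_meas[measurable]:
  assumes K: "K \<in> kernels" and B: "B \<in> sets borel"
  shows "(\<lambda>x. emeasure (K x) B) \<in> borel_measurable borel"
  using measurable_compose[OF measurable_prob_algebraD[OF K[unfolded kernels_def]] measurable_emeasure_subprob_algebra[OF B]] by (simp add: comp_def)

lemma kernel_compl_null:
  assumes K: "K \<in> kernels" and B: "B \<in> sets borel" and "emeasure (K x) B = 1"
  shows "emeasure (K x) (UNIV - B) = 0"
proof -
  interpret prob_space "K x" using kernel_prob[OF K] .
  show ?thesis using assms prob_compl[of B] kernel_sets[OF K] kernel_space[OF K]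
    by (simp add: emeasure_eq_measure measure_nonneg)
qed

context law begin

lemma MI_def2: "K \<in> kernels \<Longrightarrow> MI \<mu> K = KL_div (joint \<mu> K) (\<mu> \<Otimes>\<^sub>M out_law \<mu> K)"
  unfolding MI_def mutual_info_joint_def by (simp add: distr_joint_fst out_law_def)

lemma MI_finite_output:
  assumes K: "K \<in> kernels" and T: "finite T" and KT: "\<And>x. emeasure (K x) T = 1"
  shows "MI \<mu> K = enn2ereal (\<integral>\<^sup>+x. (\<Sum>t\<in>T. ennreal (measure (out_law \<mu> K) {t} *
            psi (measure (K x) {t} / measure (out_law \<mu> K) {t}))) \<partial>\<mu>)"
proof -
  define \<nu> where "\<nu> = out_law \<mu> K"
  define J where "J = joint \<mu> K"
  define Q where "Q = \<mu> \<Otimes>\<^sub>M \<nu>"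
  interpret \<nu>: prob_space \<nu> unfolding \<nu>_def by (rule out_law_prob[OF K])
  interpret mu: prob_space \<mu> by (rule prob)
  interpret Q: pair_prob_space \<mu> \<nu> ..
  have sQ: "sets Q = sets (borel \<Otimes>\<^sub>M borel)" unfolding Q_def
    by (intro sets_pair_measure_cong sets_mu) (simp add: \<nu>_def)
  have TB: "T \<in> sets borel" using T by (simp add: finite_imp_closed)
  define c where "c t = measure \<nu> {t}" for t
  define k where "k x t = measure (K x) {t}" for x t
  define f where "f z = (\<Sum>t\<in>T. indicator {t} (snd z) * (k (fst z) t / c t))" for z
  have km[measurable]: "(\<lambda>x. k x t) \<in> borel_measurable borel" for t
    unfolding k_def using K by measurable
  have fm[measurable]: "f \<in> borel_measurable (borel \<Otimes>\<^sub>M borel)"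
    unfolding f_def by measurable
  have fxt_gen: "f (x,t) = k x t / c t" if t: "t \<in> T" for x t
  proof -
    have "f (x,t) = (\<Sum>s\<in>T. if t = s then k x s / c s else 0)"
      unfolding f_def by (intro sum.cong) (auto simp: indicator_def)
    also have "\<dots> = k x t / c t" using T t by (simp add: sum.delta)
    finally show ?thesis .
  qed
  have fnn: "f z \<ge> 0" for z unfolding f_def c_def k_def
    by (auto intro!: sum_nonneg divide_nonneg_nonneg)
  have emK: "emeasure (K x) {t} = ennreal (k x t)" for x t
  proof -
    interpret prob_space "K x" by (rule kernel_prob[OF K])
    show ?thesis unfolding k_def by (simp add: emeasure_eq_measure)
  qed
  have emnu: "emeasure \<nu> {t} = ennreal (c t)" for t
    unfolding c_def by (simp add: \<nu>.emeasure_eq_measure)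
  have nuT: "emeasure \<nu> T = 1"
    unfolding \<nu>_def using TB by (simp add: emeasure_out_law[OF K] KT mu.emeasure_space_1)
  have nuN: "emeasure \<nu> (UNIV - T) = 0"
    using \<nu>.prob_compl[of T] nuT TB \<nu>.emeasure_eq_measure sets_eq_imp_space_eq[of \<nu> borel]
    by (simp add: \<nu>_def)
  have KN: "emeasure (K x) (UNIV - T) = 0" for x
    by (rule kernel_compl_null[OF K TB KT])
  have AE0: "AE x in \<mu>. \<forall>t\<in>T. c t = 0 \<longrightarrow> k x t = 0"
  proof (rule AE_finite_allI[OF T])
    fix t assume "t \<in> T"
    show "AE x in \<mu>. c t = 0 \<longrightarrow> k x t = 0"
    proof (cases "c t = 0")
      case True
      then have "(\<integral>\<^sup>+x. emeasure (K x) {t} \<partial>\<mu>) = 0"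
        using emnu[of t] by (simp add: \<nu>_def emeasure_out_law[OF K])
      then have "AE x in \<mu>. emeasure (K x) {t} = 0"
        using K by (subst (asm) nn_integral_0_iff_AE) (auto simp: meas_mu)
      then show ?thesis by eventually_elim (simp add: emK k_def)
    qed simp
  qed
  have fmQ: "(\<lambda>z. ennreal (f z)) \<in> borel_measurable Q"
    by (simp add: measurable_cong_sets[OF sQ refl])
  have Jdens: "J = density Q (\<lambda>z. ennreal (f z))"
  proof (rule measure_eqI)
    show "sets J = sets (density Q (\<lambda>z. ennreal (f z)))"
      by (simp add: J_def joint_sets[OF K] sQ)
  next
    fix C assume "C \<in> sets J"
    then have C: "C \<in> sets (borel \<Otimes>\<^sub>M borel)" by (simp add: J_def joint_sets[OF K])
    have Cx: "Pair x -` C \<in> sets borel" for x using C by (rule sets_Pair1)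
    have "emeasure (density Q (\<lambda>z. ennreal (f z))) C = (\<integral>\<^sup>+z. ennreal (f z) * indicator C z \<partial>Q)"
      using C fmQ by (subst emeasure_density) (auto simp: sQ)
    also have "\<dots> = (\<integral>\<^sup>+x. \<integral>\<^sup>+y. ennreal (f (x,y)) * indicator C (x,y) \<partial>\<nu> \<partial>\<mu>)"
      unfolding Q_def using C
      by (subst \<nu>.nn_integral_fst[symmetric])
         (auto simp: measurable_cong_sets[OF sets_pair_measure_cong[OF sets_mu refl] refl]
            measurable_cong_sets[OF sets_pair_measure_cong[OF refl out_law_sets] refl] \<nu>_def)
    also have "\<dots> = (\<integral>\<^sup>+x. emeasure (K x) (Pair x -` C) \<partial>\<mu>)"
    proof (rule nn_integral_cong_AE)
      show "AE x in \<mu>. (\<integral>\<^sup>+y. ennreal (f (x,y)) * indicator C (x,y) \<partial>\<nu>) = emeasure (K x) (Pair x -` C)"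
        using AE0
      proof eventually_elim
        case (elim x)
        have "(\<integral>\<^sup>+y. ennreal (f (x,y)) * indicator C (x,y) \<partial>\<nu>) =
              (\<Sum>t\<in>T. ennreal (f (x,t)) * indicator C (x,t) * emeasure \<nu> {t})"
          by (rule nn_integral_fin_supp[OF _ T nuN]) (simp add: \<nu>_def)
        also have "\<dots> = (\<Sum>t\<in>T. indicator (Pair x -` C) t * emeasure (K x) {t})"
        proof (rule sum.cong[OF refl])
          fix t assume t: "t \<in> T"
          have fxt: "f (x,t) = k x t / c t" using fxt_gen[OF t] .
          show "ennreal (f (x,t)) * indicator C (x,t) * emeasure \<nu> {t} = indicator (Pair x -` C) t * emeasure (K x) {t}"
          proof (cases "c t = 0")
            case True then show ?thesis using elim t by (simp add: emK emnu fxt)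
          next
            case False
            then have "c t > 0" unfolding c_def by (simp add: less_le)
            then have "ennreal (k x t / c t) * ennreal (c t) = ennreal (k x t)"
              by (simp add: ennreal_mult''[symmetric] k_def)
            then show ?thesis by (simp add: emK emnu fxt indicator_def)
          qed
        qed
        also have "\<dots> = (\<integral>\<^sup>+y. indicator (Pair x -` C) y \<partial>K x)"
          by (rule nn_integral_fin_supp[symmetric, OF kernel_sets[OF K] T KN])
        also have "\<dots> = emeasure (K x) (Pair x -` C)"
          using Cx by (simp add: kernel_sets[OF K])
        finally show ?case .
      qed
    qed
    also have "\<dots> = emeasure J C" unfolding J_def by (rule emeasure_joint[OF K C, symmetric])
    finally show "emeasure J C = emeasure (density Q (\<lambda>z. ennreal (f z))) C" by simp
  qed
  have ac: "absolutely_continuous Q J" unfolding Jdens by (rule absolutely_continuousI_density[OF fmQ])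
  have RN: "AE z in Q. ennreal (f z) = RN_deriv Q J z"
    using Q.RN_deriv_unique[of "\<lambda>z. ennreal (f z)" J] fmQ Jdens unfolding Q_def by simp
  have "MI \<mu> K = KL_div J Q" unfolding MI_def2[OF K] J_def Q_def \<nu>_def ..
  also have "\<dots> = enn2ereal (\<integral>\<^sup>+z. ennreal (psi (enn2real (RN_deriv Q J z))) \<partial>Q)"
  proof (rule KL_psi[OF _ _ _ ac])
    show "prob_space J" unfolding J_def by (rule joint_prob[OF K])
    show "prob_space Q" unfolding Q_def by (rule Q.prob_space_axioms)
    show "sets J = sets Q" unfolding J_def by (simp add: joint_sets[OF K] sQ)
  qed
  also have "(\<integral>\<^sup>+z. ennreal (psi (enn2real (RN_deriv Q J z))) \<partial>Q) = (\<integral>\<^sup>+z. ennreal (psi (f z)) \<partial>Q)"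
  proof (intro nn_integral_cong_AE)
    show "AE z in Q. ennreal (psi (enn2real (RN_deriv Q J z))) = ennreal (psi (f z))"
      using RN
    proof eventually_elim
      case (elim z)
      then have "enn2real (RN_deriv Q J z) = f z" using fnn[of z] by (metis enn2real_ennreal)
      then show ?case by simp
    qed
  qed
  also have "\<dots> = (\<integral>\<^sup>+x. \<integral>\<^sup>+y. ennreal (psi (f (x,y))) \<partial>\<nu> \<partial>\<mu>)"
    unfolding Q_def
    by (subst \<nu>.nn_integral_fst[symmetric])
       (auto simp: measurable_cong_sets[OF sets_pair_measure_cong[OF sets_mu refl] refl]
          measurable_cong_sets[OF sets_pair_measure_cong[OF refl out_law_sets] refl] \<nu>_def)
  also have "\<dots> = (\<integral>\<^sup>+x. (\<Sum>t\<in>T. ennreal (c t * psi (k x t / c t))) \<partial>\<mu>)"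
  proof (rule nn_integral_cong)
    fix x
    have "(\<integral>\<^sup>+y. ennreal (psi (f (x,y))) \<partial>\<nu>) = (\<Sum>t\<in>T. ennreal (psi (f (x,t))) * emeasure \<nu> {t})"
      by (rule nn_integral_fin_supp[OF _ T nuN]) (simp add: \<nu>_def)
    also have "\<dots> = (\<Sum>t\<in>T. ennreal (c t * psi (k x t / c t)))"
    proof (rule sum.cong[OF refl])
      fix t assume t: "t \<in> T"
      have fxt: "f (x,t) = k x t / c t" using fxt_gen[OF t] .
      show "ennreal (psi (f (x,t))) * emeasure \<nu> {t} = ennreal (c t * psi (k x t / c t))"
        unfolding emnu fxt c_def by (simp add: ennreal_mult'[symmetric] mult.commute)
    qed
    finally show "(\<integral>\<^sup>+y. ennreal (psi (f (x,y))) \<partial>\<nu>) = (\<Sum>t\<in>T. ennreal (c t * psi (k x t / c t)))" .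
  qed
  finally show ?thesis unfolding c_def k_def \<nu>_def .
qed

end


lemma psi_tangent2:
  assumes F: "F \<ge> 0" and c: "c > 0"
  shows "psi c + max 0 (ln c) * F + max 0 (- ln c) * c \<le> psi F + max 0 (ln c) * c + max 0 (- ln c) * F"
proof -
  have "psi c + ln c * (F - c) \<le> psi F" by (rule psi_tangent[OF F c])
  moreover have "ln c = max 0 (ln c) - max 0 (- ln c)" by auto
  ultimately show ?thesis by (smt (verit) right_diff_distrib left_diff_distrib)
qed

lemma jensen_psi:
  fixes \<nu> :: "'a measure"
  assumes fin: "finite_measure \<nu>" and B: "B \<in> sets \<nu>" and m: "measure \<nu> B > 0"
    and Fm: "F \<in> borel_measurable \<nu>" and Fnn: "\<And>y. F y \<ge> 0"
    and I: "(\<integral>\<^sup>+y. ennreal (F y) * indicator B y \<partial>\<nu>) = ennreal I" and Inn: "I \<ge> 0"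
  shows "ennreal (measure \<nu> B * psi (I / measure \<nu> B)) \<le> (\<integral>\<^sup>+y. ennreal (psi (F y)) * indicator B y \<partial>\<nu>)"
proof -
  interpret finite_measure \<nu> by fact
  define m where "m = measure \<nu> B"
  have mpos: "m > 0" using m by (simp add: m_def)
  have emB: "emeasure \<nu> B = ennreal m" unfolding m_def by (simp add: emeasure_eq_measure)
  define c where "c = I / m"
  have cnn: "c \<ge> 0" unfolding c_def using Inn mpos by simp
  have Ic: "I = c * m" unfolding c_def using mpos by simp
  show ?thesis
  proof (cases "c = 0")
    case True
    then have "I = 0" using Ic by simp
    then have "AE y in \<nu>. ennreal (F y) * indicator B y = 0"
      using I Fm B by (subst nn_integral_0_iff_AE[symmetric]) auto
    then have "(\<integral>\<^sup>+y. ennreal (psi (F y)) * indicator B y \<partial>\<nu>) = (\<integral>\<^sup>+y. 1 * indicator B y \<partial>\<nu>)"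
    proof (intro nn_integral_cong_AE)
      show "AE y in \<nu>. ennreal (psi (F y)) * indicator B y = 1 * indicator B y"
        using \<open>AE y in \<nu>. ennreal (F y) * indicator B y = 0\<close>
      proof eventually_elim
        case (elim y) then show ?case using Fnn[of y] by (cases "y \<in> B") (auto simp: psi_def)
      qed
    qed
    also have "\<dots> = ennreal m" using B emB by simp
    moreover have "m * psi (I / m) = m" using \<open>I = 0\<close> by (simp add: psi_def)
    ultimately show ?thesis unfolding m_def[symmetric] by (metis order_refl)
  next
    case False
    then have cpos: "c > 0" using cnn by simp
    define ap where "ap = max 0 (ln c)"
    define an where "an = max 0 (- ln c)"
    have apnn: "ap \<ge> 0" "an \<ge> 0" unfolding ap_def an_def by auto
    have psic: "psi c \<ge> 0" by (rule psi_nonneg[OF cnn])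
    have Fpm: "(\<lambda>y. ennreal (F y)) \<in> borel_measurable \<nu>" using Fm by measurable
    have Ppm: "(\<lambda>y. ennreal (psi (F y))) \<in> borel_measurable \<nu>" using Fm by measurable
    have "(\<integral>\<^sup>+y. ennreal (psi c + ap * F y + an * c) * indicator B y \<partial>\<nu>)
       \<le> (\<integral>\<^sup>+y. ennreal (psi (F y) + ap * c + an * F y) * indicator B y \<partial>\<nu>)"
      using psi_tangent2[OF Fnn cpos] unfolding ap_def an_def
      by (intro nn_integral_mono mult_right_mono ennreal_leI) auto
    also have "(\<integral>\<^sup>+y. ennreal (psi (F y) + ap * c + an * F y) * indicator B y \<partial>\<nu>)
       = (\<integral>\<^sup>+y. ennreal (psi (F y)) * indicator B y + ennreal (ap * c) * indicator B y
             + ennreal an * (ennreal (F y) * indicator B y) \<partial>\<nu>)"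
    proof (intro nn_integral_cong)
      fix y
      have "ennreal (psi (F y) + ap * c + an * F y) = ennreal (psi (F y)) + ennreal (ap*c) + ennreal an * ennreal (F y)"
        using apnn cnn Fnn[of y] psi_nonneg[OF Fnn[of y]] by (simp add: ennreal_mult)
      then show "ennreal (psi (F y) + ap * c + an * F y) * indicator B y = ennreal (psi (F y)) * indicator B y + ennreal (ap * c) * indicator B y
             + ennreal an * (ennreal (F y) * indicator B y)" by (simp add: distrib_right mult.assoc)
    qed
    also have "\<dots> = (\<integral>\<^sup>+y. ennreal (psi (F y)) * indicator B y \<partial>\<nu>) + ennreal (ap * c) * ennreal m + ennreal an * ennreal I"
      using B Fpm Ppm by (simp add: nn_integral_add nn_integral_cmult emB I)
    finally have le1: "(\<integral>\<^sup>+y. ennreal (psi c + ap * F y + an * c) * indicator B y \<partial>\<nu>)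
        \<le> (\<integral>\<^sup>+y. ennreal (psi (F y)) * indicator B y \<partial>\<nu>) + ennreal (ap * c) * ennreal m + ennreal an * ennreal I" .
    have "(\<integral>\<^sup>+y. ennreal (psi c + ap * F y + an * c) * indicator B y \<partial>\<nu>)
       = (\<integral>\<^sup>+y. ennreal (psi c + an * c) * indicator B y + ennreal ap * (ennreal (F y) * indicator B y) \<partial>\<nu>)"
    proof (intro nn_integral_cong)
      fix y
      have "ennreal (psi c + ap * F y + an * c) = ennreal (psi c + an * c) + ennreal ap * ennreal (F y)"
        using apnn cnn Fnn[of y] psic by (simp add: ennreal_mult ac_simps)
      then show "ennreal (psi c + ap * F y + an * c) * indicator B y = ennreal (psi c + an * c) * indicator B y + ennreal ap * (ennreal (F y) * indicator B y)"
        by (simp add: distrib_right mult.assoc)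
    qed
    also have "\<dots> = ennreal (psi c + an * c) * ennreal m + ennreal ap * ennreal I"
      using B Fpm by (simp add: nn_integral_add nn_integral_cmult emB I)
    finally have eq1: "(\<integral>\<^sup>+y. ennreal (psi c + ap * F y + an * c) * indicator B y \<partial>\<nu>)
        = ennreal (psi c + an * c) * ennreal m + ennreal ap * ennreal I" .
    define X where "X = ap * c * m + an * c * m"
    have Xnn: "X \<ge> 0" unfolding X_def using apnn cnn mpos by simp
    have L: "ennreal (psi c + an * c) * ennreal m + ennreal ap * ennreal I = ennreal (m * psi c) + ennreal X"
      using apnn cnn mpos psic unfolding Ic X_def
      by (simp add: ennreal_mult[symmetric] ennreal_plus[symmetric] mult_nonneg_nonneg add_nonneg_nonneg algebra_simps del: ennreal_plus)
    have R: "ennreal (ap * c) * ennreal m + ennreal an * ennreal I = ennreal X"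
      using apnn cnn mpos psic unfolding Ic X_def
      by (simp add: ennreal_mult[symmetric] ennreal_plus[symmetric] mult_nonneg_nonneg add_nonneg_nonneg algebra_simps del: ennreal_plus)
    have "ennreal X + ennreal (m * psi c) = ennreal (psi c + an * c) * ennreal m + ennreal ap * ennreal I"
      using L by (simp add: ac_simps)
    also have "\<dots> \<le> (\<integral>\<^sup>+y. ennreal (psi (F y)) * indicator B y \<partial>\<nu>) + ennreal (ap * c) * ennreal m + ennreal an * ennreal I"
      using le1 eq1 by simp
    also have "\<dots> = (\<integral>\<^sup>+y. ennreal (psi (F y)) * indicator B y \<partial>\<nu>) + (ennreal (ap * c) * ennreal m + ennreal an * ennreal I)"
      by (simp add: add.assoc)
    also have "\<dots> = ennreal X + (\<integral>\<^sup>+y. ennreal (psi (F y)) * indicator B y \<partial>\<nu>)"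
      unfolding R by (simp add: add.commute)
    finally have "ennreal X + ennreal (m * psi c) \<le> ennreal X + (\<integral>\<^sup>+y. ennreal (psi (F y)) * indicator B y \<partial>\<nu>)" .
    then have "ennreal (m * psi c) \<le> (\<integral>\<^sup>+y. ennreal (psi (F y)) * indicator B y \<partial>\<nu>)"
      by (simp add: ennreal_add_left_cancel_le)
    then show ?thesis unfolding c_def m_def .
  qed
qed


lemma enn2ereal_mono: "x \<le> y \<Longrightarrow> enn2ereal x \<le> enn2ereal y"
  by (simp add: less_eq_ennreal.rep_eq)

context law begin

lemma MI_nonneg: assumes K: "K \<in> kernels" shows "MI \<mu> K \<ge> 0"
proof -
  define \<nu> where "\<nu> = out_law \<mu> K"
  interpret \<nu>: prob_space \<nu> unfolding \<nu>_def by (rule out_law_prob[OF K])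
  interpret mu: prob_space \<mu> by (rule prob)
  interpret Q: pair_prob_space \<mu> \<nu> ..
  have sQ: "sets (\<mu> \<Otimes>\<^sub>M \<nu>) = sets (borel \<Otimes>\<^sub>M borel)"
    by (intro sets_pair_measure_cong sets_mu) (simp add: \<nu>_def)
  show ?thesis
  proof (cases "absolutely_continuous (\<mu> \<Otimes>\<^sub>M \<nu>) (joint \<mu> K)")
    case True
    have "MI \<mu> K = enn2ereal (\<integral>\<^sup>+z. ennreal (psi (enn2real (RN_deriv (\<mu> \<Otimes>\<^sub>M \<nu>) (joint \<mu> K) z))) \<partial>(\<mu> \<Otimes>\<^sub>M \<nu>))"
      unfolding MI_def2[OF K] \<nu>_def[symmetric]
      by (rule KL_psi[OF joint_prob[OF K] Q.prob_space_axioms _ True]) (simp add: joint_sets[OF K] sQ)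
    then show ?thesis by simp
  next
    case False
    then show ?thesis unfolding MI_def2[OF K] \<nu>_def[symmetric] KL_div_def by simp
  qed
qed

lemma MI_kq_le:
  assumes K: "K \<in> kernels" and g: "g \<in> borel_measurable borel" and T: "finite (range g)"
  shows "MI \<mu> (kq K g) \<le> MI \<mu> K"
proof (cases "MI \<mu> K = \<infinity>")
  case True then show ?thesis by simp
next
  case notinf: False
  define \<nu> where "\<nu> = out_law \<mu> K"
  define J where "J = joint \<mu> K"
  define Q where "Q = \<mu> \<Otimes>\<^sub>M \<nu>"
  interpret \<nu>: prob_space \<nu> unfolding \<nu>_def by (rule out_law_prob[OF K])
  interpret mu: prob_space \<mu> by (rule prob)
  interpret Q: pair_prob_space \<mu> \<nu> ..
  interpret J: prob_space J unfolding J_def by (rule joint_prob[OF K])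
  have sQ: "sets Q = sets (borel \<Otimes>\<^sub>M borel)" unfolding Q_def
    by (intro sets_pair_measure_cong sets_mu) (simp add: \<nu>_def)
  have sJ: "sets J = sets Q" by (simp add: J_def joint_sets[OF K] sQ)
  have ac: "absolutely_continuous Q J"
  proof (rule ccontr)
    assume "\<not> absolutely_continuous Q J"
    then have "MI \<mu> K = \<infinity>" unfolding MI_def2[OF K] KL_div_def J_def[symmetric] Q_def[symmetric] \<nu>_def[symmetric] by simp
    with notinf show False by simp
  qed
  define F where "F z = enn2real (RN_deriv Q J z)" for z
  have Fm[measurable]: "F \<in> borel_measurable (borel \<Otimes>\<^sub>M borel)"
  proof -
    have "RN_deriv Q J \<in> borel_measurable (borel \<Otimes>\<^sub>M borel)"
      using borel_measurable_RN_deriv[of Q J] measurable_cong_sets[OF sQ refl, of borel] by metis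
    then show ?thesis unfolding F_def by measurable
  qed
  have Fnn: "F z \<ge> 0" for z unfolding F_def by simp
  have FmQ: "(\<lambda>z. ennreal (F z)) \<in> borel_measurable Q"
  proof -
    have "(\<lambda>z. ennreal (F z)) \<in> borel_measurable (borel \<Otimes>\<^sub>M borel)" by measurable
    then show ?thesis using measurable_cong_sets[OF sQ refl, of borel] by metis
  qed
  have fin: "AE z in Q. RN_deriv Q J z \<noteq> \<infinity>"
    unfolding Q_def by (rule Q.RN_deriv_finite) (auto simp: ac[unfolded Q_def] sJ[unfolded Q_def] J.sigma_finite_measure_axioms)
  have Jdens: "J = density Q (\<lambda>z. ennreal (F z))"
  proof -
    have "J = density Q (RN_deriv Q J)"
      unfolding Q_def using Q.density_RN_deriv[OF ac[unfolded Q_def] sJ[unfolded Q_def]] by simp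
    also have "\<dots> = density Q (\<lambda>z. ennreal (F z))"
    proof (rule density_cong)
      show "RN_deriv Q J \<in> borel_measurable Q" by simp
      show "(\<lambda>z. ennreal (F z)) \<in> borel_measurable Q" by (rule FmQ)
      show "AE z in Q. RN_deriv Q J z = ennreal (F z)" using fin
        by eventually_elim (simp add: F_def less_top[symmetric])
    qed
    finally show ?thesis .
  qed
  have disint: "AE x in \<mu>. emeasure (K x) B = (\<integral>\<^sup>+y. ennreal (F (x,y)) * indicator B y \<partial>\<nu>)"
    if B: "B \<in> sets borel" for B
  proof -
    have m1: "(\<lambda>x. emeasure (K x) B) \<in> borel_measurable \<mu>"
      using K B by (simp add: meas_mu)
    have m2: "(\<lambda>x. \<integral>\<^sup>+y. ennreal (F (x,y)) * indicator B y \<partial>\<nu>) \<in> borel_measurable \<mu>"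
    proof -
      have "(\<lambda>z. ennreal (F z) * indicator B (snd z)) \<in> borel_measurable (borel \<Otimes>\<^sub>M borel)"
        using B by measurable
      then have "(\<lambda>z. ennreal (F z) * indicator B (snd z)) \<in> borel_measurable (\<mu> \<Otimes>\<^sub>M \<nu>)"
        using measurable_cong_sets[OF sQ[unfolded Q_def] refl, of borel] by metis
      from \<nu>.borel_measurable_nn_integral_fst[OF this] show ?thesis by simp
    qed
    have "density \<mu> (\<lambda>x. emeasure (K x) B) = density \<mu> (\<lambda>x. \<integral>\<^sup>+y. ennreal (F (x,y)) * indicator B y \<partial>\<nu>)"
    proof (rule measure_eqI)
      fix A assume "A \<in> sets (density \<mu> (\<lambda>x. emeasure (K x) B))"
      then have A: "A \<in> sets borel" by (simp add: sets_mu)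
      have AB: "A \<times> B \<in> sets (borel \<Otimes>\<^sub>M borel)" using A B by simp
      have "emeasure (density \<mu> (\<lambda>x. emeasure (K x) B)) A = (\<integral>\<^sup>+x. emeasure (K x) B * indicator A x \<partial>\<mu>)"
        using m1 A by (simp add: emeasure_density sets_mu)
      also have "\<dots> = (\<integral>\<^sup>+x. emeasure (K x) (Pair x -` (A \<times> B)) \<partial>\<mu>)"
        by (intro nn_integral_cong) (auto simp: indicator_def)
      also have "\<dots> = emeasure J (A \<times> B)" unfolding J_def by (rule emeasure_joint[OF K AB, symmetric])
      also have "\<dots> = (\<integral>\<^sup>+z. ennreal (F z) * indicator (A \<times> B) z \<partial>Q)"
        unfolding Jdens by (rule emeasure_density[OF FmQ]) (simp add: sQ AB)
      also have "\<dots> = (\<integral>\<^sup>+x. \<integral>\<^sup>+y. ennreal (F (x,y)) * indicator (A \<times> B) (x,y) \<partial>\<nu> \<partial>\<mu>)"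
      proof -
        have "(\<lambda>z. ennreal (F z) * indicator (A \<times> B) z) \<in> borel_measurable (borel \<Otimes>\<^sub>M borel)"
          using AB by measurable
        then have "(\<lambda>z. ennreal (F z) * indicator (A \<times> B) z) \<in> borel_measurable (\<mu> \<Otimes>\<^sub>M \<nu>)"
          using measurable_cong_sets[OF sQ[unfolded Q_def] refl, of borel] by metis
        from \<nu>.nn_integral_fst[OF this] show ?thesis unfolding Q_def by simp
      qed
      also have "\<dots> = (\<integral>\<^sup>+x. (\<integral>\<^sup>+y. ennreal (F (x,y)) * indicator B y \<partial>\<nu>) * indicator A x \<partial>\<mu>)"
        by (intro nn_integral_cong) (auto simp: indicator_def)
      also have "\<dots> = emeasure (density \<mu> (\<lambda>x. \<integral>\<^sup>+y. ennreal (F (x,y)) * indicator B y \<partial>\<nu>)) A"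
        using m2 A by (simp add: emeasure_density sets_mu)
      finally show "emeasure (density \<mu> (\<lambda>x. emeasure (K x) B)) A = emeasure (density \<mu> (\<lambda>x. \<integral>\<^sup>+y. ennreal (F (x,y)) * indicator B y \<partial>\<nu>)) A" .
    qed simp
    then show ?thesis by (rule mu.density_unique[OF m1 m2])
  qed
  define Tg where "Tg = range g"
  have Bt: "g -` {t} \<in> sets borel" for t using g by (auto simp: measurable_def)
  have AEall: "AE x in \<mu>. \<forall>t\<in>Tg. emeasure (K x) (g -` {t}) = (\<integral>\<^sup>+y. ennreal (F (x,y)) * indicator (g -` {t}) y \<partial>\<nu>)"
    using T unfolding Tg_def by (intro AE_finite_allI disint Bt) auto
  have KT: "emeasure (kq K g x) Tg = 1" for x
  proof -
    have "emeasure (kq K g x) Tg = emeasure (K x) UNIV"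
      using T by (simp add: emeasure_kq[OF K g] finite_imp_closed Tg_def vimage_def)
    then show ?thesis using prob_space.emeasure_space_1[OF kernel_prob[OF K]] kernel_space[OF K] by simp
  qed
  have mnu: "measure (out_law \<mu> (kq K g)) {t} = measure \<nu> (g -` {t})" for t
    unfolding out_law_kq[OF K g] \<nu>_def using g
    by (subst measure_distr) (auto simp: measurable_cong_sets[OF out_law_sets refl] sets_eq_imp_space_eq[OF out_law_sets])
  have mk: "measure (kq K g x) {t} = measure (K x) (g -` {t})" for x t
    unfolding kq_def using g
    by (subst measure_distr) (auto simp: measurable_cong_sets[OF kernel_sets[OF K] refl] kernel_space[OF K])
  have "MI \<mu> (kq K g) = enn2ereal (\<integral>\<^sup>+x. (\<Sum>t\<in>Tg. ennreal (measure \<nu> (g -` {t}) *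
            psi (measure (K x) (g -` {t}) / measure \<nu> (g -` {t})))) \<partial>\<mu>)"
    unfolding MI_finite_output[OF kq_kernels[OF K g] T[folded Tg_def] KT] mnu mk ..
  also have "\<dots> \<le> enn2ereal (\<integral>\<^sup>+x. \<integral>\<^sup>+y. ennreal (psi (F (x,y))) \<partial>\<nu> \<partial>\<mu>)"
  proof (intro enn2ereal_mono nn_integral_mono_AE)
    show "AE x in \<mu>. (\<Sum>t\<in>Tg. ennreal (measure \<nu> (g -` {t}) * psi (measure (K x) (g -` {t}) / measure \<nu> (g -` {t}))))
          \<le> (\<integral>\<^sup>+y. ennreal (psi (F (x,y))) \<partial>\<nu>)"
      using AEall
    proof eventually_elim
      case (elim x)
      have Fxm: "(\<lambda>y. F (x,y)) \<in> borel_measurable \<nu>" by (simp add: \<nu>_def measurable_cong_sets[OF out_law_sets refl])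
      have "(\<Sum>t\<in>Tg. ennreal (measure \<nu> (g -` {t}) * psi (measure (K x) (g -` {t}) / measure \<nu> (g -` {t}))))
            \<le> (\<Sum>t\<in>Tg. \<integral>\<^sup>+y. ennreal (psi (F (x,y))) * indicator (g -` {t}) y \<partial>\<nu>)"
      proof (rule sum_mono)
        fix t assume t: "t \<in> Tg"
        show "ennreal (measure \<nu> (g -` {t}) * psi (measure (K x) (g -` {t}) / measure \<nu> (g -` {t})))
            \<le> (\<integral>\<^sup>+y. ennreal (psi (F (x,y))) * indicator (g -` {t}) y \<partial>\<nu>)"
        proof (cases "measure \<nu> (g -` {t}) = 0")
          case True then show ?thesis by simp
        next
          case False
          have I: "(\<integral>\<^sup>+y. ennreal (F (x,y)) * indicator (g -` {t}) y \<partial>\<nu>) = ennreal (measure (K x) (g -` {t}))"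
          proof -
            interpret Kx: prob_space "K x" by (rule kernel_prob[OF K])
            show ?thesis using elim t by (simp add: Kx.emeasure_eq_measure)
          qed
          show ?thesis
            by (rule jensen_psi[OF \<nu>.finite_measure_axioms _ _ Fxm Fnn I])
               (use False Bt in \<open>auto simp: \<nu>_def less_le\<close>)
        qed
      qed
      also have "\<dots> = (\<integral>\<^sup>+y. (\<Sum>t\<in>Tg. ennreal (psi (F (x,y))) * indicator (g -` {t}) y) \<partial>\<nu>)"
        using Bt by (intro nn_integral_sum[symmetric]) (simp add: \<nu>_def measurable_cong_sets[OF out_law_sets refl])
      also have "\<dots> = (\<integral>\<^sup>+y. ennreal (psi (F (x,y))) \<partial>\<nu>)"
      proof (intro nn_integral_cong)
        fix y
        have "(\<Sum>t\<in>Tg. ennreal (psi (F (x,y))) * indicator (g -` {t}) y) = (\<Sum>t\<in>Tg. if t = g y then ennreal (psi (F (x,y))) else 0)"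
          by (intro sum.cong) (auto simp: indicator_def)
        also have "\<dots> = ennreal (psi (F (x,y)))" using T by (simp add: Tg_def)
        finally show "(\<Sum>t\<in>Tg. ennreal (psi (F (x,y))) * indicator (g -` {t}) y) = ennreal (psi (F (x,y)))" .
      qed
      finally show ?case .
    qed
  qed
  also have "(\<integral>\<^sup>+x. \<integral>\<^sup>+y. ennreal (psi (F (x,y))) \<partial>\<nu> \<partial>\<mu>) = (\<integral>\<^sup>+z. ennreal (psi (F z)) \<partial>Q)"
  proof -
    have "(\<lambda>z. ennreal (psi (F z))) \<in> borel_measurable (borel \<Otimes>\<^sub>M borel)" by measurable
    then have "(\<lambda>z. ennreal (psi (F z))) \<in> borel_measurable (\<mu> \<Otimes>\<^sub>M \<nu>)"
      using measurable_cong_sets[OF sQ[unfolded Q_def] refl, of borel] by metis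
    from \<nu>.nn_integral_fst[OF this] show ?thesis unfolding Q_def by simp
  qed
  also have "enn2ereal \<dots> = MI \<mu> K"
    unfolding MI_def2[OF K] J_def[symmetric] \<nu>_def[symmetric] Q_def[symmetric] F_def
    by (rule KL_psi[OF J.prob_space_axioms _ sJ ac, symmetric]) (simp add: Q_def Q.prob_space_axioms)
  finally show ?thesis .
qed

end


lemma term_bound:
  fixes k c :: real
  assumes k: "0 \<le> k" "k \<le> 1" and c: "0 < c" "c \<le> 1"
  shows "c * psi (k / c) \<le> 1 + \<bar>ln c\<bar>"
proof (cases "k = 0")
  case True
  have "ln c \<le> 0" using c by simp
  moreover have "c * psi (k / c) = c" using True by (simp add: psi_def)
  ultimately show ?thesis using c by linarith
next
  case False
  then have kp: "k > 0" using k by simp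
  have "c * psi (k / c) = k * ln k - k * ln c - k + c"
    using kp c by (simp add: psi_def ln_div field_simps)
  moreover have "k * ln k \<le> 0" using kp k by (simp add: mult_nonneg_nonpos)
  moreover have "- k * ln c \<le> \<bar>ln c\<bar>"
  proof -
    have "- k * ln c \<le> k * \<bar>ln c\<bar>" 
    proof -
      have "k * (- ln c) \<le> k * \<bar>ln c\<bar>" using kp by (intro mult_left_mono) auto
      then show ?thesis by simp
    qed
    also have "\<dots> \<le> 1 * \<bar>ln c\<bar>" using k by (intro mult_right_mono) auto
    finally show ?thesis by simp
  qed
  ultimately show ?thesis using c kp by linarith
qed

context law begin

lemma MI_finite_output_fin:
  assumes K: "K \<in> kernels" and T: "finite T" and KT: "\<And>x. emeasure (K x) T = 1"
  shows "MI \<mu> K < \<infinity>"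
proof -
  interpret mu: prob_space \<mu> by (rule prob)
  interpret \<nu>: prob_space "out_law \<mu> K" by (rule out_law_prob[OF K])
  define c where "c t = measure (out_law \<mu> K) {t}" for t
  have "(\<integral>\<^sup>+x. (\<Sum>t\<in>T. ennreal (c t * psi (measure (K x) {t} / c t))) \<partial>\<mu>)
       \<le> (\<integral>\<^sup>+x. (\<Sum>t\<in>T. ennreal (1 + \<bar>ln (c t)\<bar>)) \<partial>\<mu>)"
  proof (intro nn_integral_mono sum_mono ennreal_leI)
    fix x t
    interpret Kx: prob_space "K x" by (rule kernel_prob[OF K])
    show "c t * psi (measure (K x) {t} / c t) \<le> 1 + \<bar>ln (c t)\<bar>"
    proof (cases "c t = 0")
      case True then show ?thesis by simp
    next
      case False
      then have "c t > 0" unfolding c_def using measure_nonneg[of "out_law \<mu> K" "{t}"] by (simp add: less_le)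
      moreover have "c t \<le> 1" unfolding c_def by simp
      ultimately show ?thesis by (intro term_bound) auto
    qed
  qed
  also have "\<dots> = (\<Sum>t\<in>T. ennreal (1 + \<bar>ln (c t)\<bar>))" by (simp add: mu.emeasure_space_1)
  also have "\<dots> < \<infinity>" by (simp add: less_top[symmetric] ennreal_plus[symmetric] del: ennreal_plus)
  finally have "(\<integral>\<^sup>+x. (\<Sum>t\<in>T. ennreal (c t * psi (measure (K x) {t} / c t))) \<partial>\<mu>) < \<infinity>" .
  then show ?thesis unfolding MI_finite_output[OF K T KT] c_def
    by (simp add: less_top[symmetric])
qed

end


definition quant :: "real \<Rightarrow> real \<Rightarrow> real \<Rightarrow> real" where
  "quant M \<delta> y = (if \<bar>y\<bar> \<le> M then \<delta> * of_int \<lfloor>y / \<delta>\<rfloor> else 0)"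

lemma quant_meas[measurable]: "quant M \<delta> \<in> borel_measurable borel"
  unfolding quant_def by measurable

lemma quant_range: assumes d: "\<delta> > 0" shows "finite (range (quant M \<delta>))"
proof -
  define N where "N = \<lceil>\<bar>M\<bar> / \<delta>\<rceil> + 1"
  have "range (quant M \<delta>) \<subseteq> insert 0 ((\<lambda>k. \<delta> * of_int k) ` {-N..N})"
  proof
    fix z assume "z \<in> range (quant M \<delta>)"
    then obtain y where z: "z = quant M \<delta> y" by auto
    show "z \<in> insert 0 ((\<lambda>k. \<delta> * of_int k) ` {-N..N})"
    proof (cases "\<bar>y\<bar> \<le> M")
      case True
      have "\<bar>y\<bar> / \<delta> \<le> \<bar>M\<bar> / \<delta>" using True d by (intro divide_right_mono) auto
      then have a: "\<bar>y / \<delta>\<bar> \<le> \<bar>M\<bar> / \<delta>" using d by (simp add: abs_div)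
      then have "y / \<delta> \<le> \<bar>M\<bar> / \<delta>" "- (\<bar>M\<bar> / \<delta>) \<le> y / \<delta>" using abs_le_D1[OF a] abs_le_D2[OF a] by linarith+
      note yy = this
      have c1: "\<bar>M\<bar> / \<delta> \<le> of_int \<lceil>\<bar>M\<bar> / \<delta>\<rceil>" by (rule le_of_int_ceiling)
      have f1: "of_int \<lfloor>y / \<delta>\<rfloor> \<le> y / \<delta>" "y / \<delta> < of_int \<lfloor>y / \<delta>\<rfloor> + 1"
        using floor_correct[of "y / \<delta>"] by auto
      have "real_of_int \<lfloor>y / \<delta>\<rfloor> \<le> real_of_int N" "real_of_int (-N) \<le> real_of_int \<lfloor>y / \<delta>\<rfloor>"
        unfolding N_def of_int_add of_int_minus of_int_1 using yy c1 f1 by linarith+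
      then have "\<lfloor>y / \<delta>\<rfloor> \<le> N" "-N \<le> \<lfloor>y / \<delta>\<rfloor>" by (simp_all only: of_int_le_iff)
      then show ?thesis using True z by (auto simp: quant_def)
    qed (auto simp: z quant_def)
  qed
  then show ?thesis by (rule finite_subset) auto
qed

lemma quant_err: assumes d: "\<delta> > 0"
  shows "(y - quant M \<delta> y)\<^sup>2 \<le> \<delta>\<^sup>2 + y\<^sup>2 * indicator {y. M < \<bar>y\<bar>} y"
proof (cases "\<bar>y\<bar> \<le> M")
  case True
  have "0 \<le> y / \<delta> - of_int \<lfloor>y / \<delta>\<rfloor>" "y / \<delta> - of_int \<lfloor>y / \<delta>\<rfloor> < 1"
    by (simp_all add: floor_less_cancel)
  then have "0 \<le> y - \<delta> * of_int \<lfloor>y / \<delta>\<rfloor>" "y - \<delta> * of_int \<lfloor>y / \<delta>\<rfloor> \<le> \<delta>"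
    using d by (simp_all add: field_simps)
  then have "(y - \<delta> * of_int \<lfloor>y / \<delta>\<rfloor>)\<^sup>2 \<le> \<delta>\<^sup>2" by (intro power_mono) auto
  then show ?thesis using True by (simp add: quant_def)
next
  case False then show ?thesis by (simp add: quant_def)
qed

lemma tail_small:
  fixes \<nu> :: "real measure"
  assumes S: "sets \<nu> = sets borel" and fin: "(\<integral>\<^sup>+y. ennreal (y\<^sup>2) \<partial>\<nu>) < \<infinity>" and t: "\<tau> > 0"
  shows "\<exists>M. (\<integral>\<^sup>+y. ennreal (y\<^sup>2) * indicator {y. M < \<bar>y\<bar>} y \<partial>\<nu>) < ennreal \<tau>"
proof -
  define f where "f n y = ennreal (y\<^sup>2) * indicator {y. real n < \<bar>y\<bar>} y" for n :: nat and y :: real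
  have dec: "decseq f"
    by (intro decseq_SucI le_funI) (auto simp: f_def indicator_def)
  have fm: "f n \<in> borel_measurable \<nu>" for n unfolding f_def measurable_cong_sets[OF S refl] by measurable
  have ff: "(\<integral>\<^sup>+y. f n y \<partial>\<nu>) < \<infinity>" for n
    by (rule le_less_trans[OF _ fin]) (auto intro!: nn_integral_mono simp: f_def indicator_def)
  have "(INF n. f n y) = 0" for y
  proof -
    obtain n :: nat where "\<bar>y\<bar> \<le> real n" using real_arch_simple by blast
    then have "f n y = 0" by (simp add: f_def)
    then show ?thesis by (metis (no_types, lifting) INF_lower2 UNIV_I bot.extremum_unique bot_ennreal)
  qed
  then have "(INF n. integral\<^sup>N \<nu> (f n)) = 0"
    using nn_integral_monotone_convergence_INF_decseq[OF dec fm ff] by simp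
  then have "(INF n. integral\<^sup>N \<nu> (f n)) < ennreal \<tau>" using t by simp
  then obtain n where "integral\<^sup>N \<nu> (f n) < ennreal \<tau>" by (auto simp: INF_less_iff)
  then show ?thesis unfolding f_def by blast
qed

lemma sq_split: fixes a b \<theta> :: real assumes "\<theta> > 0"
  shows "(a + b)\<^sup>2 \<le> (1 + \<theta>) * a\<^sup>2 + (1 + 1/\<theta>) * b\<^sup>2"
proof -
  have "0 \<le> (\<theta> * a - b)\<^sup>2" by simp
  then have "2 * \<theta> * a * b \<le> \<theta>\<^sup>2 * a\<^sup>2 + b\<^sup>2" by (simp add: power2_eq_square algebra_simps)
  then have "2 * a * b \<le> \<theta> * a\<^sup>2 + b\<^sup>2 / \<theta>" using assms
    by (simp add: field_simps power2_eq_square)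
  then show ?thesis using assms by (simp add: power2_eq_square field_simps)
qed


lemma quant_core:
  fixes \<nu> :: "real measure"
  assumes P: "prob_space \<nu>" and S: "sets \<nu> = sets borel" and fin: "(\<integral>\<^sup>+y. ennreal (y\<^sup>2) \<partial>\<nu>) < \<infinity>"
    and A: "A \<ge> 0" and e: "\<eta> > 0"
  shows "\<exists>g. g \<in> borel_measurable borel \<and> finite (range g) \<and>
     (\<forall>\<pi>. sets \<pi> = sets (borel \<Otimes>\<^sub>M borel) \<longrightarrow> distr \<pi> borel snd = \<nu> \<longrightarrow>
        (\<integral>\<^sup>+z. ennreal ((fst z - snd z)\<^sup>2) \<partial>\<pi>) \<le> ennreal A \<longrightarrow>
        (\<integral>\<^sup>+z. ennreal ((fst z - g (snd z))\<^sup>2) \<partial>\<pi>) \<le> (\<integral>\<^sup>+z. ennreal ((fst z - snd z)\<^sup>2) \<partial>\<pi>) + ennreal \<eta>)"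
proof -
  interpret prob_space \<nu> by fact
  define \<theta> where "\<theta> = \<eta> / (2 * (A + 1))"
  have th: "\<theta> > 0" unfolding \<theta>_def using A e by simp
  define \<tau> where "\<tau> = \<eta> / (2 * (1 + 1 / \<theta>))"
  have ta: "\<tau> > 0" unfolding \<tau>_def using th e by (simp add: add_pos_pos)
  obtain M where tail: "(\<integral>\<^sup>+y. ennreal (y\<^sup>2) * indicator {y. M < \<bar>y\<bar>} y \<partial>\<nu>) < ennreal (\<tau> / 2)"
    using tail_small[OF S fin, of "\<tau> / 2"] ta by auto
  define \<delta> where "\<delta> = sqrt (\<tau> / 2)"
  have dpos: "\<delta> > 0" unfolding \<delta>_def using ta by simp
  have d2: "\<delta>\<^sup>2 = \<tau> / 2" unfolding \<delta>_def using ta by simp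
  define g where "g = quant M \<delta>"
  have gm[measurable]: "g \<in> borel_measurable borel" unfolding g_def by simp
  have gr: "finite (range g)" unfolding g_def by (rule quant_range[OF dpos])
  define E where "E = (\<integral>\<^sup>+y. ennreal ((y - g y)\<^sup>2) \<partial>\<nu>)"
  have "E \<le> (\<integral>\<^sup>+y. ennreal (\<delta>\<^sup>2) + ennreal (y\<^sup>2) * indicator {y. M < \<bar>y\<bar>} y \<partial>\<nu>)"
    unfolding E_def
  proof (intro nn_integral_mono)
    fix y
    have "ennreal ((y - g y)\<^sup>2) \<le> ennreal (\<delta>\<^sup>2 + y\<^sup>2 * indicator {y. M < \<bar>y\<bar>} y)"
      unfolding g_def by (intro ennreal_leI quant_err[OF dpos])
    also have "\<dots> = ennreal (\<delta>\<^sup>2) + ennreal (y\<^sup>2) * indicator {y. M < \<bar>y\<bar>} y"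
      by (simp add: indicator_def)
    finally show "ennreal ((y - g y)\<^sup>2) \<le> ennreal (\<delta>\<^sup>2) + ennreal (y\<^sup>2) * indicator {y. M < \<bar>y\<bar>} y" .
  qed
  also have "\<dots> = ennreal (\<delta>\<^sup>2) + (\<integral>\<^sup>+y. ennreal (y\<^sup>2) * indicator {y. M < \<bar>y\<bar>} y \<partial>\<nu>)"
    by (subst nn_integral_add) (auto simp: measurable_cong_sets[OF S refl] emeasure_space_1)
  also have "\<dots> < ennreal (\<tau> / 2) + ennreal (\<tau> / 2)"
    unfolding d2 using tail by (simp add: ennreal_add_left_cancel_less)
  also have "\<dots> = ennreal \<tau>" using ta by (simp add: ennreal_plus[symmetric] del: ennreal_plus)
  finally have Elt: "E < ennreal \<tau>" .
  have Etop: "E \<noteq> \<top>" using less_trans[OF Elt ennreal_less_top] by simp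
  define E' where "E' = enn2real E"
  have E'1: "E = ennreal E'" unfolding E'_def using Etop by (simp add: less_top)
  have E'2: "0 \<le> E'" unfolding E'_def by simp
  have E'3: "E' < \<tau>" using Elt unfolding E'1 using E'2 by (simp add: ennreal_less_iff)
  note E' = E'1 E'2 E'3
  show ?thesis
  proof (intro exI conjI allI impI)
    fix \<pi> :: "(real \<times> real) measure"
    assume sp: "sets \<pi> = sets (borel \<Otimes>\<^sub>M borel)" and dsnd: "distr \<pi> borel snd = \<nu>"
      and cA: "(\<integral>\<^sup>+z. ennreal ((fst z - snd z)\<^sup>2) \<partial>\<pi>) \<le> ennreal A"
    have mp: "measurable \<pi> N = measurable (borel \<Otimes>\<^sub>M borel) N" for N :: "'b measure"
      by (rule measurable_cong_sets[OF sp refl])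
    define c where "c = (\<integral>\<^sup>+z. ennreal ((fst z - snd z)\<^sup>2) \<partial>\<pi>)"
    have ctop: "c \<noteq> \<top>" using cA unfolding c_def by (auto simp: top_unique)
    define c' where "c' = enn2real c"
    have c'1: "c = ennreal c'" unfolding c'_def using ctop by (simp add: less_top)
    have c'2: "0 \<le> c'" unfolding c'_def by simp
    have c'3: "c' \<le> A" using cA unfolding c_def[symmetric] c'1 using A by (simp add: ennreal_le_iff)
    note c' = c'1 c'2 c'3
    have Eeq: "(\<integral>\<^sup>+z. ennreal ((snd z - g (snd z))\<^sup>2) \<partial>\<pi>) = E"
      unfolding E_def dsnd[symmetric] by (subst nn_integral_distr) (auto simp: mp)
    have "(\<integral>\<^sup>+z. ennreal ((fst z - g (snd z))\<^sup>2) \<partial>\<pi>)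
        \<le> (\<integral>\<^sup>+z. ennreal (1 + \<theta>) * ennreal ((fst z - snd z)\<^sup>2) + ennreal (1 + 1/\<theta>) * ennreal ((snd z - g (snd z))\<^sup>2) \<partial>\<pi>)"
    proof (intro nn_integral_mono)
      fix z :: "real \<times> real"
      have "(fst z - g (snd z))\<^sup>2 = ((fst z - snd z) + (snd z - g (snd z)))\<^sup>2" by simp
      also have "\<dots> \<le> (1 + \<theta>) * (fst z - snd z)\<^sup>2 + (1 + 1/\<theta>) * (snd z - g (snd z))\<^sup>2"
        by (rule sq_split[OF th])
      finally have "ennreal ((fst z - g (snd z))\<^sup>2) \<le> ennreal ((1 + \<theta>) * (fst z - snd z)\<^sup>2 + (1 + 1/\<theta>) * (snd z - g (snd z))\<^sup>2)"
        by (rule ennreal_leI)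
      also have "\<dots> = ennreal (1 + \<theta>) * ennreal ((fst z - snd z)\<^sup>2) + ennreal (1 + 1/\<theta>) * ennreal ((snd z - g (snd z))\<^sup>2)"
        using th by (simp add: ennreal_mult)
      finally show "ennreal ((fst z - g (snd z))\<^sup>2) \<le> ennreal (1 + \<theta>) * ennreal ((fst z - snd z)\<^sup>2) + ennreal (1 + 1/\<theta>) * ennreal ((snd z - g (snd z))\<^sup>2)" .
    qed
    also have "\<dots> = ennreal (1 + \<theta>) * c + ennreal (1 + 1/\<theta>) * E"
      unfolding c_def Eeq[symmetric] by (subst nn_integral_add) (auto simp: mp nn_integral_cmult)
    also have "\<dots> = ennreal ((1 + \<theta>) * c' + (1 + 1/\<theta>) * E')"
      using th c' E' by (simp add: ennreal_mult)
    also have "\<dots> \<le> ennreal (c' + \<eta>)"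
    proof (rule ennreal_leI)
      have "\<theta> * c' \<le> \<theta> * A" using th c' by (intro mult_left_mono) auto
      also have "\<theta> * A \<le> \<eta> / 2" unfolding \<theta>_def using A e by (simp add: field_simps)
      finally have t1: "\<theta> * c' \<le> \<eta> / 2" .
      have "(1 + 1/\<theta>) * E' \<le> (1 + 1/\<theta>) * \<tau>" using th E' by (intro mult_left_mono) auto
      also have "\<dots> = \<eta> / 2"
      proof -
        define a where "a = 1 + 1 / \<theta>"
        have "a > 0" unfolding a_def using th by (simp add: add_pos_pos)
        then show ?thesis unfolding \<tau>_def a_def[symmetric] by (simp add: field_simps)
      qed
      finally have t2: "(1 + 1/\<theta>) * E' \<le> \<eta> / 2" .
      have "(1 + \<theta>) * c' = c' + \<theta> * c'" by (simp add: algebra_simps)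
      then show "(1 + \<theta>) * c' + (1 + 1/\<theta>) * E' \<le> c' + \<eta>" using t1 t2 by linarith
    qed
    also have "\<dots> = c + ennreal \<eta>" using c' e by simp
    finally show "(\<integral>\<^sup>+z. ennreal ((fst z - g (snd z))\<^sup>2) \<partial>\<pi>) \<le> (\<integral>\<^sup>+z. ennreal ((fst z - snd z)\<^sup>2) \<partial>\<pi>) + ennreal \<eta>"
      unfolding c_def .
  qed (auto simp: gm gr)
qed


context law begin

lemma joint_coupling: assumes K: "K \<in> kernels"
  shows "joint \<mu> K \<in> couplings \<mu> (out_law \<mu> K)"
  unfolding couplings_def using joint_prob[OF K] joint_sets[OF K] distr_joint_fst[OF K]
  by (simp add: out_law_def)

lemma W2_le_distortion: assumes K: "K \<in> kernels"
  shows "W2sq \<mu> (out_law \<mu> K) \<le> distortion \<mu> K"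
  unfolding W2sq_def distortion_def by (rule INF_lower[OF joint_coupling[OF K]])

lemma out_law_moment:
  assumes mom: "(\<integral>\<^sup>+x. ennreal (x\<^sup>2) \<partial>\<mu>) < \<infinity>" and K: "K \<in> kernels" and D: "distortion \<mu> K < \<infinity>"
  shows "(\<integral>\<^sup>+y. ennreal (y\<^sup>2) \<partial>out_law \<mu> K) < \<infinity>"
proof -
  have mJ: "measurable (joint \<mu> K) N = measurable (borel \<Otimes>\<^sub>M borel) N" for N :: "'b measure"
    by (rule measurable_cong_sets[OF joint_sets[OF K] refl])
  have "(\<integral>\<^sup>+y. ennreal (y\<^sup>2) \<partial>out_law \<mu> K) = (\<integral>\<^sup>+z. ennreal ((snd z)\<^sup>2) \<partial>joint \<mu> K)"
    by (rule nn_integral_out_law[OF K]) simp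
  also have "\<dots> \<le> (\<integral>\<^sup>+z. 2 * ennreal ((fst z)\<^sup>2) + 2 * ennreal ((fst z - snd z)\<^sup>2) \<partial>joint \<mu> K)"
  proof (intro nn_integral_mono)
    fix z :: "real \<times> real"
    have "(snd z)\<^sup>2 \<le> 2 * (fst z)\<^sup>2 + 2 * (fst z - snd z)\<^sup>2"
      using sq_split[of 1 "fst z" "snd z - fst z"] by (simp add: power2_commute)
    then have "ennreal ((snd z)\<^sup>2) \<le> ennreal (2 * (fst z)\<^sup>2 + 2 * (fst z - snd z)\<^sup>2)" by (rule ennreal_leI)
    also have "\<dots> = 2 * ennreal ((fst z)\<^sup>2) + 2 * ennreal ((fst z - snd z)\<^sup>2)"
      by (simp add: ennreal_mult)
    finally show "ennreal ((snd z)\<^sup>2) \<le> 2 * ennreal ((fst z)\<^sup>2) + 2 * ennreal ((fst z - snd z)\<^sup>2)" .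
  qed
  also have "\<dots> = 2 * (\<integral>\<^sup>+z. ennreal ((fst z)\<^sup>2) \<partial>joint \<mu> K) + 2 * distortion \<mu> K"
    unfolding distortion_def by (subst nn_integral_add) (auto simp: mJ nn_integral_cmult)
  also have "(\<integral>\<^sup>+z. ennreal ((fst z)\<^sup>2) \<partial>joint \<mu> K) = (\<integral>\<^sup>+x. ennreal (x\<^sup>2) \<partial>\<mu>)"
  proof -
    have "(\<integral>\<^sup>+x. ennreal (x\<^sup>2) \<partial>distr (joint \<mu> K) borel fst) = (\<integral>\<^sup>+z. ennreal ((fst z)\<^sup>2) \<partial>joint \<mu> K)"
      by (subst nn_integral_distr) (auto simp: mJ)
    then show ?thesis unfolding distr_joint_fst[OF K] by simp
  qed
  also have "2 * (\<integral>\<^sup>+x. ennreal (x\<^sup>2) \<partial>\<mu>) + 2 * distortion \<mu> K < \<infinity>"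
    using mom D by (simp add: ennreal_mult_eq_top_iff less_top[symmetric])
  finally show ?thesis .
qed

lemma quantize:
  assumes mom: "(\<integral>\<^sup>+x. ennreal (x\<^sup>2) \<partial>\<mu>) < \<infinity>" and K: "K \<in> kernels"
    and D: "distortion \<mu> K \<le> ennreal D" and Dnn: "D \<ge> 0"
    and P: "W2sq \<mu> (out_law \<mu> K) \<le> ennreal P" and Pnn: "P \<ge> 0" and e: "\<eta> > 0"
  shows "\<exists>g. g \<in> borel_measurable borel \<and> finite (range g) \<and>
     distortion \<mu> (kq K g) \<le> ennreal (D + \<eta>) \<and> W2sq \<mu> (out_law \<mu> (kq K g)) \<le> ennreal (P + \<eta>)"
proof -
  define \<nu> where "\<nu> = out_law \<mu> K"
  have Dfin: "distortion \<mu> K < \<infinity>" using D by (simp add: le_less_trans)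
  obtain g where gm: "g \<in> borel_measurable borel" and gr: "finite (range g)" and
    core: "\<And>\<pi>. sets \<pi> = sets (borel \<Otimes>\<^sub>M borel) \<Longrightarrow> distr \<pi> borel snd = \<nu> \<Longrightarrow>
        (\<integral>\<^sup>+z. ennreal ((fst z - snd z)\<^sup>2) \<partial>\<pi>) \<le> ennreal (D + P + \<eta> + 1) \<Longrightarrow>
        (\<integral>\<^sup>+z. ennreal ((fst z - g (snd z))\<^sup>2) \<partial>\<pi>) \<le> (\<integral>\<^sup>+z. ennreal ((fst z - snd z)\<^sup>2) \<partial>\<pi>) + ennreal (\<eta> / 2)"
    using quant_core[OF out_law_prob[OF K] out_law_sets out_law_moment[OF mom K Dfin], of "D + P + \<eta> + 1" "\<eta> / 2"]
      Dnn Pnn e unfolding \<nu>_def by auto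
  have g[measurable]: "g \<in> borel_measurable borel" by (rule gm)
  have "distortion \<mu> (kq K g) = (\<integral>\<^sup>+z. ennreal ((fst z - g (snd z))\<^sup>2) \<partial>joint \<mu> K)"
    by (rule distortion_kq[OF K gm])
  also have "\<dots> \<le> distortion \<mu> K + ennreal (\<eta> / 2)"
    unfolding distortion_def
  proof (rule core)
    show "sets (joint \<mu> K) = sets (borel \<Otimes>\<^sub>M borel)" by (rule joint_sets[OF K])
    show "distr (joint \<mu> K) borel snd = \<nu>" by (simp add: \<nu>_def out_law_def)
    have "ennreal D \<le> ennreal (D + P + \<eta> + 1)" using Pnn e by (intro ennreal_leI) auto
    then show "(\<integral>\<^sup>+z. ennreal ((fst z - snd z)\<^sup>2) \<partial>joint \<mu> K) \<le> ennreal (D + P + \<eta> + 1)"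
      using D unfolding distortion_def by (rule order_trans[rotated])
  qed
  also have "\<dots> \<le> ennreal D + ennreal (\<eta> / 2)" using D by (rule add_right_mono)
  also have "\<dots> \<le> ennreal (D + \<eta>)" using Dnn e by (simp add: ennreal_plus[symmetric] del: ennreal_plus)
  finally have distg: "distortion \<mu> (kq K g) \<le> ennreal (D + \<eta>)" .
  have "W2sq \<mu> \<nu> < ennreal (P + \<eta> / 2)"
  proof -
    have "ennreal P < ennreal (P + \<eta> / 2)" using e Pnn by (simp add: ennreal_lessI)
    then show ?thesis using P unfolding \<nu>_def by (rule le_less_trans[rotated])
  qed
  then obtain \<pi> where \<pi>c: "\<pi> \<in> couplings \<mu> \<nu>" and \<pi>lt: "(\<integral>\<^sup>+z. ennreal ((fst z - snd z)\<^sup>2) \<partial>\<pi>) < ennreal (P + \<eta> / 2)"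
    unfolding W2sq_def by (auto simp: INF_less_iff)
  have \<pi>p: "prob_space \<pi>" and \<pi>s: "sets \<pi> = sets (borel \<Otimes>\<^sub>M borel)" and \<pi>1: "distr \<pi> borel fst = \<mu>"
    and \<pi>2: "distr \<pi> borel snd = \<nu>" using \<pi>c by (auto simp: couplings_def)
  have mp: "measurable \<pi> N = measurable (borel \<Otimes>\<^sub>M borel) N" for N :: "'b measure"
    by (rule measurable_cong_sets[OF \<pi>s refl])
  define \<pi>' where "\<pi>' = distr \<pi> (borel \<Otimes>\<^sub>M borel) (\<lambda>z. (fst z, g (snd z)))"
  have mm: "(\<lambda>z. (fst z, g (snd z))) \<in> \<pi> \<rightarrow>\<^sub>M borel \<Otimes>\<^sub>M borel" by (simp add: mp)
  have \<pi>'c: "\<pi>' \<in> couplings \<mu> (out_law \<mu> (kq K g))"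
    unfolding couplings_def
  proof (intro CollectI conjI)
    show "prob_space \<pi>'" unfolding \<pi>'_def by (rule prob_space.prob_space_distr[OF \<pi>p mm])
    show "sets \<pi>' = sets (borel \<Otimes>\<^sub>M borel)" by (simp add: \<pi>'_def)
    have "distr \<pi>' borel fst = distr \<pi> borel fst" unfolding \<pi>'_def
      by (subst distr_distr) (auto simp: mp comp_def)
    then show "distr \<pi>' borel fst = \<mu>" using \<pi>1 by simp
    have "distr \<pi>' borel snd = distr \<pi> borel (\<lambda>z. g (snd z))" unfolding \<pi>'_def
      by (subst distr_distr) (auto simp: mp comp_def)
    also have "\<dots> = distr (distr \<pi> borel snd) borel g"
      by (subst distr_distr) (auto simp: mp comp_def)
    also have "\<dots> = out_law \<mu> (kq K g)" unfolding \<pi>2 \<nu>_def by (rule out_law_kq[OF K gm, symmetric])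
    finally show "distr \<pi>' borel snd = out_law \<mu> (kq K g)" .
  qed
  have "W2sq \<mu> (out_law \<mu> (kq K g)) \<le> (\<integral>\<^sup>+z. ennreal ((fst z - snd z)\<^sup>2) \<partial>\<pi>')"
    unfolding W2sq_def by (rule INF_lower[OF \<pi>'c])
  also have "\<dots> = (\<integral>\<^sup>+z. ennreal ((fst z - g (snd z))\<^sup>2) \<partial>\<pi>)"
    unfolding \<pi>'_def by (subst nn_integral_distr) (auto simp: mp)
  also have "\<dots> \<le> (\<integral>\<^sup>+z. ennreal ((fst z - snd z)\<^sup>2) \<partial>\<pi>) + ennreal (\<eta> / 2)"
  proof (rule core[OF \<pi>s \<pi>2])
    have "ennreal (P + \<eta> / 2) \<le> ennreal (D + P + \<eta> + 1)" using Dnn e by (intro ennreal_leI) auto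
    then show "(\<integral>\<^sup>+z. ennreal ((fst z - snd z)\<^sup>2) \<partial>\<pi>) \<le> ennreal (D + P + \<eta> + 1)"
      using \<pi>lt by (meson less_imp_le order_trans)
  qed
  also have "\<dots> \<le> ennreal (P + \<eta> / 2) + ennreal (\<eta> / 2)" using \<pi>lt by (intro add_right_mono less_imp_le)
  also have "\<dots> = ennreal (P + \<eta>)" using Pnn e by (simp add: ennreal_plus[symmetric] del: ennreal_plus)
  finally show ?thesis using gm gr distg by blast
qed

end


lemma kq_range_one: assumes K: "K \<in> kernels" and g: "g \<in> borel_measurable borel" and T: "finite (range g)"
  shows "emeasure (kq K g x) (range g) = 1"
proof -
  have "emeasure (kq K g x) (range g) = emeasure (K x) UNIV"
    using T by (simp add: emeasure_kq[OF K g] finite_imp_closed vimage_def)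
  then show ?thesis using prob_space.emeasure_space_1[OF kernel_prob[OF K]] kernel_space[OF K] by simp
qed

lemma return_kernel: "return borel \<in> kernels"
  unfolding kernels_def by (rule measurable_return_prob_space)

context law begin

lemma distortion_return: "distortion \<mu> (return borel) = 0"
  by (simp add: distortion_eq[OF return_kernel] nn_integral_return)

lemma RDP_nonneg: "0 \<le> RDP \<mu> D P"
  unfolding RDP_def by (rule INF_greatest) (auto intro: MI_nonneg)

lemma RDP_fin:
  assumes mom: "(\<integral>\<^sup>+x. ennreal (x\<^sup>2) \<partial>\<mu>) < \<infinity>" and D: "D > 0" and P: "P > 0"
  shows "RDP \<mu> D P < \<infinity>"
proof -
  have W0: "W2sq \<mu> (out_law \<mu> (return borel)) \<le> ennreal 0"
    using W2_le_distortion[OF return_kernel] distortion_return by simp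
  have dist0: "distortion \<mu> (return borel) \<le> ennreal 0" using distortion_return by simp
  obtain g where g: "g \<in> borel_measurable borel" and gr: "finite (range g)"
    and d: "distortion \<mu> (kq (return borel) g) \<le> ennreal (0 + min D P)"
    and w: "W2sq \<mu> (out_law \<mu> (kq (return borel) g)) \<le> ennreal (0 + min D P)"
    using quantize[OF mom return_kernel dist0 _ W0, of "min D P"] D P by auto
  define K1 where "K1 = kq (return borel) g"
  have K1: "K1 \<in> kernels" unfolding K1_def by (rule kq_kernels[OF return_kernel g])
  have "K1 \<in> {K \<in> kernels. distortion \<mu> K \<le> ennreal D \<and> W2sq \<mu> (out_law \<mu> K) \<le> ennreal P}"
  proof (intro CollectI conjI K1)
    show "distortion \<mu> K1 \<le> ennreal D" using d unfolding K1_def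
      by (rule order_trans) (intro ennreal_leI, simp)
    show "W2sq \<mu> (out_law \<mu> K1) \<le> ennreal P" using w unfolding K1_def
      by (rule order_trans) (intro ennreal_leI, simp)
  qed
  then have "RDP \<mu> D P \<le> MI \<mu> K1" unfolding RDP_def by (rule INF_lower)
  also have "MI \<mu> K1 < \<infinity>"
    unfolding K1_def by (rule MI_finite_output_fin[OF kq_kernels[OF return_kernel g] gr kq_range_one[OF return_kernel g gr]])
  finally show ?thesis .
qed

lemma max_moment:
  assumes mom: "(\<integral>\<^sup>+x. ennreal (x\<^sup>2) \<partial>\<mu>) < \<infinity>" and S: "finite S" "S \<noteq> {}"
  shows "(\<integral>\<^sup>+x. ennreal (Max ((\<lambda>s. (x - s)\<^sup>2) ` S)) \<partial>\<mu>) < \<infinity>"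
proof -
  interpret mu: prob_space \<mu> by (rule prob)
  define C where "C = Max ((\<lambda>s. s\<^sup>2) ` S)"
  have C0: "C \<ge> 0" unfolding C_def using S by (auto simp: Max_ge_iff)
  have "(\<integral>\<^sup>+x. ennreal (Max ((\<lambda>s. (x - s)\<^sup>2) ` S)) \<partial>\<mu>) \<le> (\<integral>\<^sup>+x. 2 * ennreal (x\<^sup>2) + ennreal (2 * C) \<partial>\<mu>)"
  proof (intro nn_integral_mono)
    fix x
    have "Max ((\<lambda>s. (x - s)\<^sup>2) ` S) \<le> 2 * x\<^sup>2 + 2 * C"
    proof (subst Max_le_iff)
      show "\<forall>a\<in>(\<lambda>s. (x - s)\<^sup>2) ` S. a \<le> 2 * x\<^sup>2 + 2 * C"
      proof
        fix a assume "a \<in> (\<lambda>s. (x - s)\<^sup>2) ` S"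
        then obtain s where s: "s \<in> S" "a = (x - s)\<^sup>2" by auto
        have "(x - s)\<^sup>2 \<le> 2 * x\<^sup>2 + 2 * s\<^sup>2"
          using sq_split[of 1 x "- s"] by simp
        moreover have "s\<^sup>2 \<le> C" unfolding C_def using S s by (auto intro: Max_ge)
        ultimately show "a \<le> 2 * x\<^sup>2 + 2 * C" using s by linarith
      qed
    qed (use S in auto)
    then have "ennreal (Max ((\<lambda>s. (x - s)\<^sup>2) ` S)) \<le> ennreal (2 * x\<^sup>2 + 2 * C)" by (rule ennreal_leI)
    also have "\<dots> = 2 * ennreal (x\<^sup>2) + ennreal (2 * C)" using C0 by (simp add: ennreal_mult)
    finally show "ennreal (Max ((\<lambda>s. (x - s)\<^sup>2) ` S)) \<le> 2 * ennreal (x\<^sup>2) + ennreal (2 * C)" .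
  qed
  also have "\<dots> = 2 * (\<integral>\<^sup>+x. ennreal (x\<^sup>2) \<partial>\<mu>) + ennreal (2 * C)"
    by (subst nn_integral_add) (auto simp: meas_mu nn_integral_cmult mu.emeasure_space_1)
  also have "\<dots> < \<infinity>" using mom by (simp add: ennreal_mult_eq_top_iff less_top[symmetric])
  finally show ?thesis .
qed

lemma W2_supported:
  assumes mom: "(\<integral>\<^sup>+x. ennreal (x\<^sup>2) \<partial>\<mu>) < \<infinity>" and S: "finite S" "S \<noteq> {}"
    and \<gamma>: "\<gamma> \<in> space (prob_algebra borel)" and \<gamma>S: "emeasure \<gamma> S = 1"
  shows "W2sq \<mu> \<gamma> < \<infinity>"
proof -
  interpret mu: prob_space \<mu> by (rule prob)
  have \<gamma>s: "sets \<gamma> = sets borel" and \<gamma>p: "prob_space \<gamma>" using \<gamma> by (auto simp: space_prob_algebra)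
  interpret g: prob_space \<gamma> by (rule \<gamma>p)
  interpret pp: pair_prob_space \<mu> \<gamma> ..
  have sp: "sets (\<mu> \<Otimes>\<^sub>M \<gamma>) = sets (borel \<Otimes>\<^sub>M borel)"
    by (intro sets_pair_measure_cong sets_mu \<gamma>s)
  have mp: "measurable (\<mu> \<Otimes>\<^sub>M \<gamma>) N = measurable (borel \<Otimes>\<^sub>M borel) N" for N :: "'b measure"
    by (rule measurable_cong_sets[OF sp refl])
  have c: "\<mu> \<Otimes>\<^sub>M \<gamma> \<in> couplings \<mu> \<gamma>"
    unfolding couplings_def
  proof (intro CollectI conjI)
    show "prob_space (\<mu> \<Otimes>\<^sub>M \<gamma>)" by (rule pp.prob_space_axioms)
    show "sets (\<mu> \<Otimes>\<^sub>M \<gamma>) = sets (borel \<Otimes>\<^sub>M borel)" by (rule sp)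
    have "distr (\<mu> \<Otimes>\<^sub>M \<gamma>) borel fst = distr (\<mu> \<Otimes>\<^sub>M \<gamma>) \<mu> fst"
      by (rule distr_cong) (auto simp: sets_mu)
    then show "distr (\<mu> \<Otimes>\<^sub>M \<gamma>) borel fst = \<mu>" using g.distr_pair_fst by simp
    show "distr (\<mu> \<Otimes>\<^sub>M \<gamma>) borel snd = \<gamma>"
    proof (rule measure_eqI)
      fix B assume "B \<in> sets (distr (\<mu> \<Otimes>\<^sub>M \<gamma>) borel snd)"
      then have B: "B \<in> sets borel" by simp
      have "emeasure (distr (\<mu> \<Otimes>\<^sub>M \<gamma>) borel snd) B = emeasure (\<mu> \<Otimes>\<^sub>M \<gamma>) (UNIV \<times> B)"
        using B by (subst emeasure_distr) (auto simp: mp space_pair_measure space_mu sets_eq_imp_space_eq[OF \<gamma>s] vimage_def Times_eq_snd_vimage[symmetric])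
      also have "\<dots> = emeasure \<mu> UNIV * emeasure \<gamma> B"
        using B by (subst g.emeasure_pair_measure_Times) (auto simp: sets_mu \<gamma>s)
      also have "\<dots> = emeasure \<gamma> B" using mu.emeasure_space_1 space_mu by simp
      finally show "emeasure (distr (\<mu> \<Otimes>\<^sub>M \<gamma>) borel snd) B = emeasure \<gamma> B" .
    qed (simp add: \<gamma>s)
  qed
  have AES: "AE y in \<gamma>. y \<in> S"
  proof -
    have SB: "S \<in> sets \<gamma>" using S by (simp add: \<gamma>s finite_imp_closed)
    have "emeasure \<gamma> (space \<gamma> - S) = 0"
      using g.prob_compl[OF SB] \<gamma>S g.emeasure_eq_measure by simp
    then show ?thesis using SB by (intro AE_I[where N="space \<gamma> - S"]) auto
  qed
  have "W2sq \<mu> \<gamma> \<le> (\<integral>\<^sup>+z. ennreal ((fst z - snd z)\<^sup>2) \<partial>(\<mu> \<Otimes>\<^sub>M \<gamma>))"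
    unfolding W2sq_def by (rule INF_lower[OF c])
  also have "\<dots> = (\<integral>\<^sup>+x. \<integral>\<^sup>+y. ennreal ((x - y)\<^sup>2) \<partial>\<gamma> \<partial>\<mu>)"
  proof -
    have "(\<lambda>z. ennreal ((fst z - snd z)\<^sup>2)) \<in> borel_measurable (\<mu> \<Otimes>\<^sub>M \<gamma>)" by (simp add: mp)
    from g.nn_integral_fst[OF this] show ?thesis by simp
  qed
  also have "\<dots> \<le> (\<integral>\<^sup>+x. ennreal (Max ((\<lambda>s. (x - s)\<^sup>2) ` S)) \<partial>\<mu>)"
  proof (intro nn_integral_mono)
    fix x
    have "(\<integral>\<^sup>+y. ennreal ((x - y)\<^sup>2) \<partial>\<gamma>) \<le> (\<integral>\<^sup>+y. ennreal (Max ((\<lambda>s. (x - s)\<^sup>2) ` S)) \<partial>\<gamma>)"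
    proof (intro nn_integral_mono_AE)
      show "AE y in \<gamma>. ennreal ((x - y)\<^sup>2) \<le> ennreal (Max ((\<lambda>s. (x - s)\<^sup>2) ` S))"
        using AES by eventually_elim (intro ennreal_leI Max_ge, use S in auto)
    qed
    also have "\<dots> = ennreal (Max ((\<lambda>s. (x - s)\<^sup>2) ` S))" using g.emeasure_space_1 by simp
    finally show "(\<integral>\<^sup>+y. ennreal ((x - y)\<^sup>2) \<partial>\<gamma>) \<le> ennreal (Max ((\<lambda>s. (x - s)\<^sup>2) ` S))" .
  qed
  also have "\<dots> < \<infinity>" by (rule max_moment[OF mom S])
  finally show ?thesis .
qed

end


theorem mainTheorem13:
  fixes \<mu> :: "real measure"
  assumes "prob_space \<mu>" and "sets \<mu> = sets borel"
    and "(\<integral>\<^sup>+ x. ennreal (x\<^sup>2) \<partial>\<mu>) < \<infinity>"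
  shows "(\<forall>D P. D > 0 \<longrightarrow> P > 0 \<longrightarrow> RDP \<mu> D P < \<infinity>) \<and>
         (\<forall>D P \<epsilon>. D > 0 \<longrightarrow> P > 0 \<longrightarrow> \<epsilon> > 0 \<longrightarrow>
            (\<exists>K S. K \<in> kernels \<and> finite S
               \<and> emeasure (out_law \<mu> K) S = 1
               \<and> (\<forall>s\<in>S. emeasure (out_law \<mu> K) {s} > 0)
               \<and> MI \<mu> K \<le> RDP \<mu> D P + ereal \<epsilon>
               \<and> distortion \<mu> K \<le> ennreal (D + \<epsilon>)
               \<and> (\<integral>\<^sup>+ x. ennreal (Max ((\<lambda>s. (x - s)\<^sup>2) ` S)) \<partial>\<mu>) < \<infinity>
               \<and> W2sq \<mu> (out_law \<mu> K) \<le> ennreal (P + \<epsilon>)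
               \<and> (\<forall>\<gamma> \<in> space (prob_algebra borel). emeasure \<gamma> S = 1 \<longrightarrow> W2sq \<mu> \<gamma> < \<infinity>)))"
proof -
  interpret law \<mu> by (rule law.intro[OF assms(1,2)])
  note mom = assms(3)
  have part1: "\<forall>D P. D > 0 \<longrightarrow> P > 0 \<longrightarrow> RDP \<mu> D P < \<infinity>"
    using RDP_fin[OF mom] by blast
  have part2: "\<exists>K S. K \<in> kernels \<and> finite S
               \<and> emeasure (out_law \<mu> K) S = 1
               \<and> (\<forall>s\<in>S. emeasure (out_law \<mu> K) {s} > 0)
               \<and> MI \<mu> K \<le> RDP \<mu> D P + ereal \<epsilon>
               \<and> distortion \<mu> K \<le> ennreal (D + \<epsilon>)
               \<and> (\<integral>\<^sup>+ x. ennreal (Max ((\<lambda>s. (x - s)\<^sup>2) ` S)) \<partial>\<mu>) < \<infinity>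
               \<and> W2sq \<mu> (out_law \<mu> K) \<le> ennreal (P + \<epsilon>)
               \<and> (\<forall>\<gamma> \<in> space (prob_algebra borel). emeasure \<gamma> S = 1 \<longrightarrow> W2sq \<mu> \<gamma> < \<infinity>)"
    if D: "D > 0" and P: "P > 0" and e: "\<epsilon> > 0" for D P \<epsilon>
  proof -
    have fin: "RDP \<mu> D P < \<infinity>" by (rule RDP_fin[OF mom D P])
    have nn: "0 \<le> RDP \<mu> D P" by (rule RDP_nonneg)
    obtain r where r: "RDP \<mu> D P = ereal r" using fin nn by (cases "RDP \<mu> D P") auto
    have "RDP \<mu> D P < RDP \<mu> D P + ereal \<epsilon>" using r e by simp
    then obtain K where K: "K \<in> kernels" and KD: "distortion \<mu> K \<le> ennreal D"
      and KP: "W2sq \<mu> (out_law \<mu> K) \<le> ennreal P" and KMI: "MI \<mu> K < RDP \<mu> D P + ereal \<epsilon>"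
      unfolding RDP_def[of \<mu> D P] by (subst (asm) (1) INF_less_iff) auto
    obtain g where g: "g \<in> borel_measurable borel" and gr: "finite (range g)"
      and d: "distortion \<mu> (kq K g) \<le> ennreal (D + \<epsilon>)"
      and w: "W2sq \<mu> (out_law \<mu> (kq K g)) \<le> ennreal (P + \<epsilon>)"
      using quantize[OF mom K KD _ KP _ e] D P by auto
    define K' where "K' = kq K g"
    have K': "K' \<in> kernels" unfolding K'_def by (rule kq_kernels[OF K g])
    define \<nu> where "\<nu> = out_law \<mu> K'"
    interpret \<nu>: prob_space \<nu> unfolding \<nu>_def by (rule out_law_prob[OF K'])
    interpret mu: prob_space \<mu> by (rule prob)
    define S where "S = {t \<in> range g. 0 < emeasure \<nu> {t}}"
    have Sfin: "finite S" unfolding S_def using gr by simp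
    have rB: "range g \<in> sets \<nu>" using gr by (simp add: \<nu>_def finite_imp_closed)
    have Ssets: "S \<in> sets \<nu>" using Sfin by (simp add: \<nu>_def finite_imp_closed)
    have R1: "emeasure \<nu> (range g) = 1"
      unfolding \<nu>_def K'_def
      using gr by (simp add: emeasure_out_law[OF kq_kernels[OF K g]] finite_imp_closed
            kq_range_one[OF K g gr] mu.emeasure_space_1)
    have R0: "emeasure \<nu> (range g - S) = 0"
    proof -
      have "emeasure \<nu> (range g - S) = (\<Sum>t\<in>range g - S. emeasure \<nu> {t})"
        using gr by (intro emeasure_eq_sum_singleton) (auto simp: \<nu>_def)
      also have "\<dots> = 0" by (intro sum.neutral) (auto simp: S_def)
      finally show ?thesis .
    qed
    have "emeasure \<nu> S + emeasure \<nu> (range g - S) = emeasure \<nu> (S \<union> (range g - S))"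
      using gr Sfin by (intro plus_emeasure) (auto simp: \<nu>_def finite_imp_closed)
    also have "S \<union> (range g - S) = range g" unfolding S_def by auto
    finally have S1: "emeasure \<nu> S = 1" using R1 R0 by simp
    have Sne: "S \<noteq> {}" using S1 by auto
    show ?thesis
    proof (intro exI conjI)
      show "K' \<in> kernels" by (rule K')
      show "finite S" by (rule Sfin)
      show "emeasure (out_law \<mu> K') S = 1" using S1 by (simp add: \<nu>_def)
      show "\<forall>s\<in>S. emeasure (out_law \<mu> K') {s} > 0" by (simp add: S_def \<nu>_def)
      have "MI \<mu> K' \<le> MI \<mu> K" unfolding K'_def by (rule MI_kq_le[OF K g gr])
      then show "MI \<mu> K' \<le> RDP \<mu> D P + ereal \<epsilon>" using KMI by simp
      show "distortion \<mu> K' \<le> ennreal (D + \<epsilon>)" using d by (simp add: K'_def)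
      show "(\<integral>\<^sup>+ x. ennreal (Max ((\<lambda>s. (x - s)\<^sup>2) ` S)) \<partial>\<mu>) < \<infinity>" by (rule max_moment[OF mom Sfin Sne])
      show "W2sq \<mu> (out_law \<mu> K') \<le> ennreal (P + \<epsilon>)" using w by (simp add: K'_def)
      show "\<forall>\<gamma> \<in> space (prob_algebra borel). emeasure \<gamma> S = 1 \<longrightarrow> W2sq \<mu> \<gamma> < \<infinity>"
        using W2_supported[OF mom Sfin Sne] by blast
    qed
  qed
  show ?thesis using part1 part2 by blast
qed


end
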